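(* Let $\lambda\in\{1,-1\}$, $0<T<\infty$, and let $q(x,t)$ be a real, sufficiently smooth solution of the mKdV equation $q_t+q_{xxx}-6\lambda q^2q_x=0$ on $0<x<\infty$, $0<t<T$, decaying sufficiently fast as $x\to\infty$, with compatible initial and boundary data. Let $\Phi_1,\Phi_2$, $a,b$, $F$, $c$ be as in the context, so that the global relation $c(t,k)=\Phi_1(t,k)+\frac{b(k)}{a(k)}\overline{\Phi_2(t,\bar k)}e^{-8ik^3t}$ holds for $\operatorname{Im}k\ge0$. Then $$c(t,k)=\frac{\Phi_1^{(1)}(t)}{k}+\frac{\Phi_1^{(2)}(t)}{k^2}+\frac{\Phi_1^{(3)}(t)}{k^3}+O\Big(\frac1{k^4}\Big),\qquad k\to\infty,\ k\in D_1,$$ where $\Phi_1^{(j)}$ are the coefficients of the expansions $\Phi_1(t,k)=\sum_{j=1}^3\Phi_1^{(j)}(t)k^{-j}+O(k^{-4})+O(e^{-8ik^3t}k^{-2})$, $\Phi_2(t,k)=1+\Phi_2^{(1)}(t)k^{-1}+\Phi_2^{(2)}(t)k^{-2}+O(k^{-3})$ valid as $k\to\infty$, $k\in D_2\cup D_4$; explicitly, with $I_\Delta(t)=\int_0^t\big(g_1^2-2g_0g_2+3\lambda g_0^4\big)(\tau)d\tau$, $\Phi_2^{(1)}=\frac{\lambda}{2i}I_\Delta$, $\Phi_2^{(2)}=\frac18\big[\lambda(g_0(t)^2-g_0(0)^2)-I_\Delta(t)^2\big]$, $\Phi_1^{(1)}=\frac{g_0}{2i}$, $\Phi_1^{(2)}=\frac{g_1}{4}-\frac{\lambda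 g_0}{4}I_\Delta$, $\Phi_1^{(3)}=\frac1{2i}\big(g_0\Phi_2^{(2)}+\frac i2g_1\Phi_2^{(1)}+\frac{\lambda g_0^3}{4}-\frac14g_2\big)$.
   Context: $g_0(t)=q(0,t)$, $g_1(t)=q_x(0,t)$, $g_2(t)=q_{xx}(0,t)$. $\sigma_3=\mathrm{diag}(1,-1)$, $Q(x,t)=\begin{pmatrix}0&q\\ \lambda q&0\end{pmatrix}$, $e^{s\hat\sigma_3}M=e^{s\sigma_3}Me^{-s\sigma_3}$. Domains: $D_1=\{\operatorname{Im}k>0,\operatorname{Im}k^3>0\}$ (i.e. $\arg k\in(0,\pi/3)\cup(2\pi/3,\pi)$), $D_2=\{\arg k\in(\pi/3,2\pi/3)\}$, $D_3=\{\arg k\in(-2\pi/3,-\pi/3)\}$, $D_4=\{\operatorname{Im}k<0,\operatorname{Im}k^3<0\}$. $\Phi_1,\Phi_2$ ($0<t<T$, $k\in\mathbb C$) are the unique solution of $\Phi_1(t,k)=\int_0^te^{8ik^3(t'-t)}[-2ik\lambda g_0^2\Phi_1+(2\lambda g_0^3+4k^2g_0+2ikg_1-g_2)\Phi_2](t',k)dt'$, $\Phi_2(t,k)=1+\lambda\int_0^t[(2\lambda g_0^3+4k^2g_0-2ikg_1-g_2)\Phi_1+2ikg_0^2\Phi_2](t',k)dt'$. For each $t$, $\mu_3(x,t,k)$ solves $\mu_3=I-\int_x^\infty e^{-ik(x-\xi)\hat\sigma_3}(Q\mu_3)(\xi,t,k)d\xi$ (second column analytic in $\operatorname{Im}k>0$);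 $\Psi(x,k)=\mu_3(x,0,k)$, $a(k)=\Psi_{22}(0,k)$, $b(k)=\Psi_{12}(0,k)$ for $\operatorname{Im}k\ge0$; $F(t,k)=\mu_3(0,t,k)$, whose second column is analytic and bounded in $\operatorname{Im}k>0$ with $F=I+O(1/k)$; $c(t,k)=F_{12}(t,k)/a(k)$. *)

theory Defs
  imports "HOL-Analysis.Analysis" "HOL-Library.Landau_Symbols"
begin

definition pdx :: "(real \<Rightarrow> real \<Rightarrow> real) \<Rightarrow> real \<Rightarrow> real \<Rightarrow> real" where
  "pdx f x t = deriv (\<lambda>y. f y t) x"

definition pdt :: "(real \<Rightarrow> real \<Rightarrow> real) \<Rightarrow> real \<Rightarrow> real \<Rightarrow> real" where
  "pdt f x t = deriv (\<lambda>s. f x s) t"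

fun pder :: "bool list \<Rightarrow> (real \<Rightarrow> real \<Rightarrow> real) \<Rightarrow> real \<Rightarrow> real \<Rightarrow> real" where
  "pder [] f = f"
| "pder (d # ds) f = (if d then pdx (pder ds f) else pdt (pder ds f))"

definition smooth2 :: "(real \<Rightarrow> real \<Rightarrow> real) \<Rightarrow> bool" where
  "smooth2 f \<longleftrightarrow> (\<forall>ds. continuous_on UNIV (\<lambda>z. pder ds f (fst z) (snd z))
      \<and> (\<forall>x t. (\<lambda>y. pder ds f y t) differentiable (at x))
      \<and> (\<forall>x t. (\<lambda>s. pder ds f x s) differentiable (at t)))"

definition rapid_decay :: "(real \<Rightarrow> real \<Rightarrow> real) \<Rightarrow> real \<Rightarrow> bool" where
  "rapid_decay f T \<longleftrightarrow> (\<forall>ds (n::nat). \<exists>C. \<forall>x\<ge>0. \<forall>t\<in>{0..T}.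
      (1 + x) ^ n * \<bar>pder ds f x t\<bar> \<le> C)"

definition g0 :: "(real \<Rightarrow> real \<Rightarrow> real) \<Rightarrow> real \<Rightarrow> real" where
  "g0 q t = q 0 t"
definition g1 :: "(real \<Rightarrow> real \<Rightarrow> real) \<Rightarrow> real \<Rightarrow> real" where
  "g1 q t = pdx q 0 t"
definition g2 :: "(real \<Rightarrow> real \<Rightarrow> real) \<Rightarrow> real \<Rightarrow> real" where
  "g2 q t = pdx (pdx q) 0 t"

definition D1 :: "complex set" where
  "D1 = {k. Im k > 0 \<and> Im (k ^ 3) > 0}"

definition I_Delta :: "real \<Rightarrow> (real \<Rightarrow> real \<Rightarrow> real) \<Rightarrow> real \<Rightarrow> real" where
  "I_Delta lam q t = integral {0..t}
     (\<lambda>\<tau>. (g1 q \<tau>)\<^sup>2 - 2 * g0 q \<tau> * g2 q \<tau> + 3 * lam * (g0 q \<tau>) ^ 4)"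

definition Phi2_1 :: "real \<Rightarrow> (real \<Rightarrow> real \<Rightarrow> real) \<Rightarrow> real \<Rightarrow> complex" where
  "Phi2_1 lam q t = complex_of_real lam / (2 * \<i>) * complex_of_real (I_Delta lam q t)"

definition Phi2_2 :: "real \<Rightarrow> (real \<Rightarrow> real \<Rightarrow> real) \<Rightarrow> real \<Rightarrow> complex" where
  "Phi2_2 lam q t = complex_of_real
     ((lam * ((g0 q t)\<^sup>2 - (g0 q 0)\<^sup>2) - (I_Delta lam q t)\<^sup>2) / 8)"

definition Phi1_1 :: "(real \<Rightarrow> real \<Rightarrow> real) \<Rightarrow> real \<Rightarrow> complex" where
  "Phi1_1 q t = complex_of_real (g0 q t) / (2 * \<i>)"

definition Phi1_2 :: "real \<Rightarrow> (real \<Rightarrow> real \<Rightarrow> real) \<Rightarrow> real \<Rightarrow> complex" where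
  "Phi1_2 lam q t = complex_of_real (g1 q t / 4 - lam * g0 q t / 4 * I_Delta lam q t)"

definition Phi1_3 :: "real \<Rightarrow> (real \<Rightarrow> real \<Rightarrow> real) \<Rightarrow> real \<Rightarrow> complex" where
  "Phi1_3 lam q t = 1 / (2 * \<i>) *
     (complex_of_real (g0 q t) * Phi2_2 lam q t
      + \<i> / 2 * complex_of_real (g1 q t) * Phi2_1 lam q t
      + complex_of_real (lam * (g0 q t) ^ 3 / 4)
      - complex_of_real (g2 q t) / 4)"

end

theory Submission
  imports Defs
begin

lemma dec_integrable_aux:
  fixes a C :: real assumes "a \<ge> 0" "C \<ge> 0"
  shows "((\<lambda>x. C / (1 + x)^2) has_integral (C / (1 + a))) {a..}"
proof (rule has_integral_to_inf)
  show "(\<lambda>x. C / (1 + x)^2) integrable_on {a..y}" for y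
    using assms by (intro integrable_continuous_interval continuous_intros) auto
  have "((\<lambda>x. C / (1 + x)^2) has_integral (C/(1+a) - C/(1+y))) {a..y}" if "y \<ge> a" for y
  proof -
    have "((\<lambda>x. C / (1 + x)^2) has_integral ((-C/(1+y)) - (-C/(1+a)))) {a..y}"
    using that assms
    by (intro fundamental_theorem_of_calculus)
       (auto intro!: derivative_eq_intros simp: power2_eq_square field_simps
             simp flip: has_real_derivative_iff_has_vector_derivative)
    then show ?thesis by simp
  qed
  then have "\<forall>\<^sub>F y in at_top. integral {a..y} (\<lambda>x. C / (1 + x)^2) = C/(1+a) - C/(1+y)"
    by (meson eventually_at_top_linorderI integral_unique)
  moreover have "((\<lambda>y::real. C/(1+a) - C/(1+y)) \<longlongrightarrow> C/(1+a)) at_top"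
    by real_asymp
  ultimately show "((\<lambda>y. integral {a..y} (\<lambda>x. C / (1 + x)^2)) \<longlongrightarrow> C/(1+a)) at_top"
    by (simp add: filterlim_cong)
qed (use assms in auto)

lemma dec_integrable:
  fixes g :: "real \<Rightarrow> 'a::euclidean_space"
  assumes a: "a \<ge> 0" and cont: "continuous_on {a..} g"
    and bnd: "\<And>x. x \<ge> a \<Longrightarrow> norm (g x) \<le> C/(1+x)^2"
  shows "g integrable_on {a..}"
proof -
  have "0 \<le> norm (g a)" by simp
  also have "\<dots> \<le> C/(1+a)^2" using bnd by simp
  finally have C: "C \<ge> 0" using a by (simp add: zero_le_divide_iff)
  show ?thesis
  proof (rule measurable_bounded_by_integrable_imp_integrable)
    show "g \<in> borel_measurable (lebesgue_on {a..})"
      by (rule continuous_imp_measurable_on_sets_lebesgue[OF cont]) auto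
    show "(\<lambda>x. C/(1+x)^2) integrable_on {a..}"
      using dec_integrable_aux[OF a C] by blast
  qed (use bnd in auto)
qed

lemma improper_FTC:
  fixes g G :: "real \<Rightarrow> 'a::euclidean_space"
  assumes a: "a \<ge> 0" and cont: "continuous_on {a..} g"
    and bnd: "\<And>x. x \<ge> a \<Longrightarrow> norm (g x) \<le> C/(1+x)^2"
    and deriv: "\<And>x. x \<ge> a \<Longrightarrow> (G has_vector_derivative g x) (at x within {a..})"
    and lim: "(G \<longlongrightarrow> L) at_top"
  shows "(g has_integral (L - G a)) {a..}"
proof -
  have "0 \<le> norm (g a)" by simp
  also have "\<dots> \<le> C/(1+a)^2" using bnd by simp
  finally have C: "C \<ge> 0" using a by (simp add: zero_le_divide_iff)
  define fn where "fn = (\<lambda>n::nat. \<lambda>x. if x \<in> {a..a + real n} then g x else 0)"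
  have int_n: "(fn n has_integral (G (a + real n) - G a)) {a..}" for n
  proof -
    have "(g has_integral (G (a + real n) - G a)) {a..a + real n}"
      by (intro fundamental_theorem_of_calculus)
         (auto intro: has_vector_derivative_within_subset[OF deriv])
    then show ?thesis unfolding fn_def
      by (subst has_integral_restrict) auto
  qed
  have hint: "(\<lambda>x. C/(1+x)^2) integrable_on {a..}"
    using dec_integrable_aux[OF a C] by blast
  have d1: "fn n integrable_on {a..}" for n using int_n by blast
  have d3: "norm (fn n x) \<le> C/(1+x)^2" if "x \<in> {a..}" for n x
      using that bnd C by (auto simp: fn_def)
  have d4: "(\<lambda>n. fn n x) \<longlonglongrightarrow> g x" if "x \<in> {a..}" for x
    proof -
      have "eventually (\<lambda>n. real n \<ge> x - a) sequentially"
        by (meson eventually_sequentiallyI nat_ceiling_le_eq)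
      then have "eventually (\<lambda>n. fn n x = g x) sequentially"
        by (rule eventually_mono) (use that in \<open>auto simp: fn_def\<close>)
      then show ?thesis by (simp add: tendsto_eventually)
    qed
  note dc = dominated_convergence[OF d1 hint d3 d4]
  have "(\<lambda>n. G (a + real n)) \<longlonglongrightarrow> L"
  proof -
    have "filterlim (\<lambda>n. a + real n) at_top sequentially"
      by (intro filterlim_tendsto_add_at_top[OF tendsto_const] filterlim_real_sequentially)
    then show ?thesis using lim by (rule filterlim_compose[rotated])
  qed
  then have "(\<lambda>n. G (a + real n) - G a) \<longlonglongrightarrow> L - G a"
    by (intro tendsto_diff tendsto_const)
  moreover have "integral {a..} (fn n) = G (a + real n) - G a" for n
    using int_n by (rule integral_unique)
  ultimately have "(\<lambda>n. integral {a..} (fn n)) \<longlonglongrightarrow> L - G a" by simp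
  then have "integral {a..} g = L - G a"
    using dc(2) LIMSEQ_unique by blast
  then show ?thesis using dc(1) by (metis has_integral_integral)
qed

lemma norm_exp_osc:
  fixes k :: complex and y :: real
  assumes "Im k \<ge> 0" "y \<ge> 0"
  shows "norm (exp (2 * \<i> * k * complex_of_real y)) \<le> 1"
proof -
  have "Re (2 * \<i> * k * complex_of_real y) = - 2 * Im k * y" by simp
  moreover have "- 2 * Im k * y \<le> 0" using assms by (simp add: mult_nonneg_nonneg)
  ultimately show ?thesis by (simp add: norm_exp_eq_Re)
qed

lemma weight_integral:
  fixes C x :: real assumes C: "C \<ge> 0" and x: "x \<ge> 0"
  shows "((\<lambda>\<xi>. C/(1+\<xi>)^2 * exp (2*C/(1+\<xi>))) has_integral ((exp (2*C/(1+x)) - 1)/2)) {x..}"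
proof -
  have "((\<lambda>\<xi>. C/(1+\<xi>)^2 * exp (2*C/(1+\<xi>))) has_integral (-1/2 - (- exp (2*C/(1+x))/2))) {x..}"
  proof (rule improper_FTC[where C="C * exp (2*C)"])
    show "continuous_on {x..} (\<lambda>\<xi>. C/(1+\<xi>)^2 * exp (2*C/(1+\<xi>)))"
      using x by (intro continuous_intros) auto
    show "norm (C/(1+\<xi>)^2 * exp (2*C/(1+\<xi>))) \<le> C * exp (2*C) / (1+\<xi>)^2" if "\<xi> \<ge> x" for \<xi>
    proof -
      have "2*C/(1+\<xi>) \<le> 2*C" using that x C by (simp add: divide_le_eq mult_left_le mult_le_cancel_left1)
      then have "exp (2*C/(1+\<xi>)) \<le> exp (2*C)" by simp
      then show ?thesis using that x C
        by (simp add: abs_mult divide_right_mono mult_left_mono)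
    qed
    show "((\<lambda>\<xi>. - exp (2*C/(1+\<xi>))/2) has_vector_derivative (C/(1+\<xi>)^2 * exp (2*C/(1+\<xi>)))) (at \<xi> within {x..})"
      if "\<xi> \<ge> x" for \<xi>
    proof -
      have ne: "1 + \<xi> \<noteq> 0" using that x by auto
      have "((\<lambda>\<xi>. - exp (2*C/(1+\<xi>))/2) has_real_derivative (- (exp (2*C/(1+\<xi>)) * (- 2*C/(1+\<xi>)^2))/2)) (at \<xi> within {x..})"
        using ne by (auto intro!: derivative_eq_intros simp: power2_eq_square)
      moreover have "(- (exp (2*C/(1+\<xi>)) * (- 2*C/(1+\<xi>)^2))/2) = C/(1+\<xi>)^2 * exp (2*C/(1+\<xi>))"
        by simp
      ultimately have "((\<lambda>\<xi>. - exp (2*C/(1+\<xi>))/2) has_real_derivative (C/(1+\<xi>)^2 * exp (2*C/(1+\<xi>)))) (at \<xi> within {x..})"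
        by metis
      then show ?thesis by (simp add: has_real_derivative_iff_has_vector_derivative)
    qed
    show "((\<lambda>\<xi>. - exp (2*C/(1+\<xi>))/2) \<longlongrightarrow> -1/2) at_top"
      by real_asymp
  qed (use x in auto)
  then show ?thesis by (simp add: diff_divide_distrib)
qed

lemma stability:
  fixes f :: "real \<Rightarrow> real" and k :: complex and eu ev Fu Fv :: "real \<Rightarrow> complex"
    and lam C M \<epsilon> :: real
  assumes Ik: "Im k \<ge> 0" and lam: "\<bar>lam\<bar> = 1" and C: "C \<ge> 0"
    and fb: "\<And>x. x \<ge> 0 \<Longrightarrow> \<bar>f x\<bar> \<le> C/(1+x)^2"
    and bu: "\<And>x. x \<ge> 0 \<Longrightarrow> norm (eu x) \<le> M"
    and bv: "\<And>x. x \<ge> 0 \<Longrightarrow> norm (ev x) \<le> M"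
    and iu: "\<And>x. x \<ge> 0 \<Longrightarrow> ((\<lambda>\<xi>. exp (2 * \<i> * k * complex_of_real (\<xi> - x)) * complex_of_real (f \<xi>) * ev \<xi>)
                 has_integral (Fu x - eu x)) {x..}"
    and iv: "\<And>x. x \<ge> 0 \<Longrightarrow> ((\<lambda>\<xi>. complex_of_real lam * complex_of_real (f \<xi>) * eu \<xi>)
                 has_integral (Fv x - ev x)) {x..}"
    and Fub: "\<And>x. x \<ge> 0 \<Longrightarrow> norm (Fu x) \<le> \<epsilon>"
    and Fvb: "\<And>x. x \<ge> 0 \<Longrightarrow> norm (Fv x) \<le> \<epsilon>"
    and x: "x \<ge> 0"
  shows "norm (eu x) \<le> 2 * \<epsilon> * exp (2*C) \<and> norm (ev x) \<le> 2 * \<epsilon> * exp (2*C)"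
proof -
  define w where "w = (\<lambda>\<xi>::real. exp (2*C/(1+\<xi>)))"
  have w1: "w y \<ge> 1" if "y \<ge> 0" for y
    using that C unfolding w_def by simp
  have w2: "w y \<le> exp (2*C)" if "y \<ge> 0" for y
  proof -
    have "2*C/(1+y) \<le> 2*C" using that C by (simp add: divide_le_eq mult_left_le mult_le_cancel_left1)
    then show ?thesis unfolding w_def by simp
  qed
  have eps: "\<epsilon> \<ge> 0" using Fub[of 0] norm_ge_zero[of "Fu 0"] by linarith
  have M: "M \<ge> 0" using bu[of 0] norm_ge_zero[of "eu 0"] by linarith
  have wint: "((\<lambda>\<xi>. S * (C/(1+\<xi>)^2 * w \<xi>)) has_integral (S * ((w y - 1)/2))) {y..}" if "y \<ge> 0" for y S
    unfolding w_def by (intro has_integral_mult_right weight_integral C that)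
  have step: "norm (eu y) \<le> (\<epsilon> + S/2) * w y \<and> norm (ev y) \<le> (\<epsilon> + S/2) * w y"
    if S: "S \<ge> 0" and hyp: "\<And>y. y \<ge> 0 \<Longrightarrow> norm (eu y) \<le> S * w y \<and> norm (ev y) \<le> S * w y"
      and y: "y \<ge> 0" for S y
  proof
    have "eu y = Fu y - integral {y..} (\<lambda>\<xi>. exp (2 * \<i> * k * complex_of_real (\<xi> - y)) * complex_of_real (f \<xi>) * ev \<xi>)"
      using iu[OF y] by (simp add: integral_unique)
    then have "norm (eu y) \<le> norm (Fu y) + norm (integral {y..} (\<lambda>\<xi>. exp (2 * \<i> * k * complex_of_real (\<xi> - y)) * complex_of_real (f \<xi>) * ev \<xi>))"
      by (metis norm_triangle_ineq4)
    also have "norm (integral {y..} (\<lambda>\<xi>. exp (2 * \<i> * k * complex_of_real (\<xi> - y)) * complex_of_real (f \<xi>) * ev \<xi>))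
        \<le> integral {y..} (\<lambda>\<xi>. S * (C/(1+\<xi>)^2 * w \<xi>))"
    proof (rule integral_norm_bound_integral)
      show "(\<lambda>\<xi>. exp (2 * \<i> * k * complex_of_real (\<xi> - y)) * complex_of_real (f \<xi>) * ev \<xi>) integrable_on {y..}"
        using iu[OF y] by blast
      show "(\<lambda>\<xi>. S * (C/(1+\<xi>)^2 * w \<xi>)) integrable_on {y..}" using wint[OF y] by blast
      fix \<xi> assume "\<xi> \<in> {y..}"
      then have xi: "\<xi> \<ge> y" "\<xi> \<ge> 0" using y by auto
      have "norm (exp (2 * \<i> * k * complex_of_real (\<xi> - y)) * complex_of_real (f \<xi>) * ev \<xi>)
          = norm (exp (2 * \<i> * k * complex_of_real (\<xi> - y))) * \<bar>f \<xi>\<bar> * norm (ev \<xi>)"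
        by (simp add: norm_mult)
      also have "\<dots> \<le> 1 * (C/(1+\<xi>)^2) * (S * w \<xi>)"
        using norm_exp_osc[OF Ik, of "\<xi> - y"] xi fb[OF xi(2)] hyp[OF xi(2)]
        by (intro mult_mono) auto
      finally show "norm (exp (2 * \<i> * k * complex_of_real (\<xi> - y)) * complex_of_real (f \<xi>) * ev \<xi>)
          \<le> S * (C/(1+\<xi>)^2 * w \<xi>)" by (simp add: algebra_simps)
    qed
    also have "integral {y..} (\<lambda>\<xi>. S * (C/(1+\<xi>)^2 * w \<xi>)) = S * ((w y - 1)/2)"
      using wint[OF y] by (rule integral_unique)
    finally have "norm (eu y) \<le> \<epsilon> + S * ((w y - 1)/2)" using Fub[OF y] by linarith
    also have "\<dots> \<le> (\<epsilon> + S/2) * w y"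
    proof -
      have "\<epsilon> \<le> \<epsilon> * w y" using mult_left_mono[OF w1[OF y] eps] by simp
      moreover have "(\<epsilon> + S/2) * w y = \<epsilon> * w y + S * w y/2" by (simp add: distrib_right)
      moreover have "\<epsilon> + S * ((w y - 1)/2) = \<epsilon> + S * w y/2 - S/2" by (simp add: right_diff_distrib diff_divide_distrib)
      ultimately show ?thesis using S by linarith
    qed
    finally show "norm (eu y) \<le> (\<epsilon> + S/2) * w y" .
  next
    have "ev y = Fv y - integral {y..} (\<lambda>\<xi>. complex_of_real lam * complex_of_real (f \<xi>) * eu \<xi>)"
      using iv[OF y] by (simp add: integral_unique)
    then have "norm (ev y) \<le> norm (Fv y) + norm (integral {y..} (\<lambda>\<xi>. complex_of_real lam * complex_of_real (f \<xi>) * eu \<xi>))"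
      by (metis norm_triangle_ineq4)
    also have "norm (integral {y..} (\<lambda>\<xi>. complex_of_real lam * complex_of_real (f \<xi>) * eu \<xi>))
        \<le> integral {y..} (\<lambda>\<xi>. S * (C/(1+\<xi>)^2 * w \<xi>))"
    proof (rule integral_norm_bound_integral)
      show "(\<lambda>\<xi>. complex_of_real lam * complex_of_real (f \<xi>) * eu \<xi>) integrable_on {y..}"
        using iv[OF y] by blast
      show "(\<lambda>\<xi>. S * (C/(1+\<xi>)^2 * w \<xi>)) integrable_on {y..}" using wint[OF y] by blast
      fix \<xi> assume "\<xi> \<in> {y..}"
      then have xi: "\<xi> \<ge> y" "\<xi> \<ge> 0" using y by auto
      have "norm (complex_of_real lam * complex_of_real (f \<xi>) * eu \<xi>)
          = 1 * \<bar>f \<xi>\<bar> * norm (eu \<xi>)"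
        using lam by (simp add: norm_mult)
      also have "\<dots> \<le> 1 * (C/(1+\<xi>)^2) * (S * w \<xi>)"
        using xi fb[OF xi(2)] hyp[OF xi(2)]
        by (intro mult_mono) auto
      finally show "norm (complex_of_real lam * complex_of_real (f \<xi>) * eu \<xi>)
          \<le> S * (C/(1+\<xi>)^2 * w \<xi>)" by (simp add: algebra_simps)
    qed
    also have "integral {y..} (\<lambda>\<xi>. S * (C/(1+\<xi>)^2 * w \<xi>)) = S * ((w y - 1)/2)"
      using wint[OF y] by (rule integral_unique)
    finally have "norm (ev y) \<le> \<epsilon> + S * ((w y - 1)/2)" using Fvb[OF y] by linarith
    also have "\<dots> \<le> (\<epsilon> + S/2) * w y"
    proof -
      have "\<epsilon> \<le> \<epsilon> * w y" using mult_left_mono[OF w1[OF y] eps] by simp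
      moreover have "(\<epsilon> + S/2) * w y = \<epsilon> * w y + S * w y/2" by (simp add: distrib_right)
      moreover have "\<epsilon> + S * ((w y - 1)/2) = \<epsilon> + S * w y/2 - S/2" by (simp add: right_diff_distrib diff_divide_distrib)
      ultimately show ?thesis using S by linarith
    qed
    finally show "norm (ev y) \<le> (\<epsilon> + S/2) * w y" .
  qed
  have ind: "\<forall>y\<ge>0. norm (eu y) \<le> (2*\<epsilon> + M/2^n) * w y \<and> norm (ev y) \<le> (2*\<epsilon> + M/2^n) * w y" for n
  proof (induction n)
    case 0
    show ?case
    proof (intro allI impI conjI)
      fix y :: real assume y: "y \<ge> 0"
      have "M \<le> (2*\<epsilon> + M) * w y"
        using w1[OF y] eps M
        by (smt (verit, ccfv_SIG) mult_le_cancel_left1 mult_nonneg_nonneg)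
      then show "norm (eu y) \<le> (2*\<epsilon> + M/2^0) * w y" "norm (ev y) \<le> (2*\<epsilon> + M/2^0) * w y"
        using bu[OF y] bv[OF y] by auto
    qed
  next
    case (Suc n)
    have S0: "2*\<epsilon> + M/2^n \<ge> 0" using eps M by simp
    have e: "\<epsilon> + (2*\<epsilon> + M/2^n)/2 = 2*\<epsilon> + M/2^Suc n" by (simp add: field_simps)
    show ?case using step[OF S0] Suc.IH unfolding e by blast
  qed
  have lim: "(\<lambda>n. (2*\<epsilon> + M/2^n) * w x) \<longlonglongrightarrow> (2*\<epsilon> + 0) * w x"
    by (intro tendsto_intros LIMSEQ_divide_realpow_zero) auto
  have "norm (eu x) \<le> 2*\<epsilon> * w x"
    using tendsto_le[OF trivial_limit_sequentially lim tendsto_const] ind x by auto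
  moreover have "norm (ev x) \<le> 2*\<epsilon> * w x"
    using tendsto_le[OF trivial_limit_sequentially lim tendsto_const] ind x by auto
  moreover have "2*\<epsilon> * w x \<le> 2 * \<epsilon> * exp (2*C)"
    using w2[OF x] eps by (simp add: mult_left_mono)
  ultimately show ?thesis by linarith
qed

lemma dec_bound_C:
  fixes g :: "real \<Rightarrow> 'a::real_normed_vector"
  assumes "\<And>x. x \<ge> 0 \<Longrightarrow> norm (g x) \<le> C/(1+x)^2" shows "C \<ge> 0"
proof -
  have "0 \<le> norm (g 0)" by simp
  also have "\<dots> \<le> C" using assms[of 0] by simp
  finally show ?thesis .
qed

lemma within_Ici_eq: "x \<ge> (0::real) \<Longrightarrow> at x within {0..} = at x within {0..x+1}"
  by (rule at_within_nhd[where S="{x - 1 <..< x + 1}"]) auto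

lemma tail_integral:
  fixes g :: "real \<Rightarrow> 'a::euclidean_space"
  assumes cont: "continuous_on {0..} g" and bnd: "\<And>x. x \<ge> 0 \<Longrightarrow> norm (g x) \<le> C/(1+x)^2"
  shows tail_deriv: "\<And>x. x \<ge> 0 \<Longrightarrow> ((\<lambda>y. integral {y..} g) has_vector_derivative (- g x)) (at x within {0..})"
    and tail_bound: "\<And>x. x \<ge> 0 \<Longrightarrow> norm (integral {x..} g) \<le> C/(1+x)"
    and tail_lim: "((\<lambda>y. integral {y..} g) \<longlongrightarrow> 0) at_top"
proof -
  have C: "C \<ge> 0" by (rule dec_bound_C[of g C, OF bnd])
  have intg: "g integrable_on {y..}" if "y \<ge> 0" for y
  proof (rule dec_integrable[OF that _ bnd])
    show "continuous_on {y..} g" by (rule continuous_on_subset[OF cont]) (use that in auto)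
  qed (use that in auto)
  have split: "integral {y..} g = integral {0..} g - integral {0..y} g" if y: "y \<ge> 0" for y
  proof -
    have i1: "(g has_integral integral {0..y} g) {0..y}"
      using y by (intro integrable_integral integrable_continuous_interval continuous_on_subset[OF cont]) auto
    have i2: "(g has_integral integral {y..} g) {y..}" using intg[OF y] by (rule integrable_integral)
    have "{0..y} \<inter> {y..} = {y}" using y by auto
    then have "(g has_integral (integral {0..y} g + integral {y..} g)) ({0..y} \<union> {y..})"
      by (intro has_integral_Un[OF i1 i2]) auto
    moreover have "{0..y} \<union> {y..} = {0..}" using y by auto
    ultimately show ?thesis by (simp add: integral_unique)
  qed
  show "((\<lambda>y. integral {y..} g) has_vector_derivative (- g x)) (at x within {0..})" if x: "x \<ge> 0" for x
  proof -
    have "((\<lambda>u. integral {0..u} g) has_vector_derivative g x) (at x within {0..x+1})"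
      using x by (intro integral_has_vector_derivative continuous_on_subset[OF cont]) auto
    then have "((\<lambda>u. integral {0..} g - integral {0..u} g) has_vector_derivative (- g x)) (at x within {0..x+1})"
      by (auto intro!: derivative_eq_intros)
    then have "((\<lambda>u. integral {0..} g - integral {0..u} g) has_vector_derivative (- g x)) (at x within {0..})"
      using within_Ici_eq[OF x] by simp
    then show ?thesis
    proof (rule has_vector_derivative_transform[rotated 2])
      show "x \<in> {0..}" using x by simp
      show "integral {y..} g = integral {0..} g - integral {0..y} g" if "y \<in> {0..}" for y
        by (rule split) (use that in simp)
    qed
  qed
  show tb: "norm (integral {x..} g) \<le> C/(1+x)" if x: "x \<ge> 0" for x
  proof -
    have "norm (integral {x..} g) \<le> integral {x..} (\<lambda>x. C/(1+x)^2)"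
      using intg[OF x] dec_integrable_aux[OF x C] bnd x
      by (intro integral_norm_bound_integral) auto
    also have "\<dots> = C/(1+x)" using dec_integrable_aux[OF x C] by (rule integral_unique)
    finally show ?thesis .
  qed
  show "((\<lambda>y. integral {y..} g) \<longlongrightarrow> 0) at_top"
  proof (rule Lim_null_comparison)
    show "\<forall>\<^sub>F x in at_top. norm (integral {x..} g) \<le> C/(1+x)"
      using tb by (auto intro: eventually_at_top_linorderI[of 0])
    show "((\<lambda>x. C/(1+x)) \<longlongrightarrow> 0) at_top" by real_asymp
  qed
qed

definition dec :: "(real \<Rightarrow> real) \<Rightarrow> bool" where
  "dec h \<longleftrightarrow> (\<exists>K. \<forall>x\<ge>0. \<bar>h x\<bar> \<le> K/(1+x)^2)"
definition bnd :: "(real \<Rightarrow> real) \<Rightarrow> bool" where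
  "bnd h \<longleftrightarrow> (\<exists>K. \<forall>x\<ge>0. \<bar>h x\<bar> \<le> K)"

lemma bnd_const[intro]: "bnd (\<lambda>x. c)" unfolding bnd_def by auto

lemma dec_imp_bnd: "dec h \<Longrightarrow> bnd h"
proof -
  assume "dec h" then obtain K where K: "\<And>x. x \<ge> 0 \<Longrightarrow> \<bar>h x\<bar> \<le> K/(1+x)^2" unfolding dec_def by auto
  have K0: "K \<ge> 0" using K[of 0] by simp
  have "\<bar>h x\<bar> \<le> K" if "x \<ge> 0" for x
  proof -
    have "K/(1+x)^2 \<le> K/1" using that K0 by (intro divide_left_mono) (auto simp: power_one_right one_le_power)
    then show ?thesis using K[OF that] by simp
  qed
  then show ?thesis unfolding bnd_def by auto
qed

lemma dec_mult_bnd: assumes "dec f" "bnd g" shows "dec (\<lambda>x. f x * g x)"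
proof -
  obtain K where K: "\<And>x. x \<ge> 0 \<Longrightarrow> \<bar>f x\<bar> \<le> K/(1+x)^2" using assms(1) unfolding dec_def by auto
  obtain L where L: "\<And>x. x \<ge> 0 \<Longrightarrow> \<bar>g x\<bar> \<le> L" using assms(2) unfolding bnd_def by auto
  have L0: "L \<ge> 0" using L[of 0] by simp
  have "\<bar>f x * g x\<bar> \<le> (K*L)/(1+x)^2" if "x \<ge> 0" for x
  proof -
    have "\<bar>f x * g x\<bar> = \<bar>f x\<bar> * \<bar>g x\<bar>" by (simp add: abs_mult)
    also have "\<dots> \<le> K/(1+x)^2 * L" using K[OF that] L[OF that] L0 by (intro mult_mono) auto
    finally show ?thesis by simp
  qed
  then show ?thesis unfolding dec_def by blast
qed

lemma bnd_mult_dec: "bnd f \<Longrightarrow> dec g \<Longrightarrow> dec (\<lambda>x. f x * g x)"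
  using dec_mult_bnd[of g f] by (simp add: mult.commute)

lemma bnd_mult: assumes "bnd f" "bnd g" shows "bnd (\<lambda>x. f x * g x)"
proof -
  obtain K where K: "\<And>x. x \<ge> 0 \<Longrightarrow> \<bar>f x\<bar> \<le> K" using assms(1) unfolding bnd_def by auto
  obtain L where L: "\<And>x. x \<ge> 0 \<Longrightarrow> \<bar>g x\<bar> \<le> L" using assms(2) unfolding bnd_def by auto
  have "\<bar>f x * g x\<bar> \<le> K*L" if "x \<ge> 0" for x
    using K[OF that] L[OF that] by (simp add: abs_mult mult_mono')
  then show ?thesis unfolding bnd_def by blast
qed

lemma dec_add: assumes "dec f" "dec g" shows "dec (\<lambda>x. f x + g x)"
proof -
  obtain K where K: "\<And>x. x \<ge> 0 \<Longrightarrow> \<bar>f x\<bar> \<le> K/(1+x)^2" using assms(1) unfolding dec_def by auto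
  obtain L where L: "\<And>x. x \<ge> 0 \<Longrightarrow> \<bar>g x\<bar> \<le> L/(1+x)^2" using assms(2) unfolding dec_def by auto
  have "\<bar>f x + g x\<bar> \<le> (K+L)/(1+x)^2" if "x \<ge> 0" for x
    using K[OF that] L[OF that] by (simp add: add_divide_distrib)
  then show ?thesis unfolding dec_def by blast
qed

lemma dec_minus: "dec f \<Longrightarrow> dec (\<lambda>x. - f x)" unfolding dec_def by simp

lemma dec_diff: "dec f \<Longrightarrow> dec g \<Longrightarrow> dec (\<lambda>x. f x - g x)"
  using dec_add[of f "\<lambda>x. - g x"] dec_minus[of g] by simp

lemma bnd_add: assumes "bnd f" "bnd g" shows "bnd (\<lambda>x. f x + g x)"
proof -
  obtain K where K: "\<And>x. x \<ge> 0 \<Longrightarrow> \<bar>f x\<bar> \<le> K" using assms(1) unfolding bnd_def by auto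
  obtain L where L: "\<And>x. x \<ge> 0 \<Longrightarrow> \<bar>g x\<bar> \<le> L" using assms(2) unfolding bnd_def by auto
  have "\<bar>f x + g x\<bar> \<le> K+L" if "x \<ge> 0" for x using K[OF that] L[OF that] by simp
  then show ?thesis unfolding bnd_def by blast
qed

lemma bnd_minus: "bnd f \<Longrightarrow> bnd (\<lambda>x. - f x)" unfolding bnd_def by simp

lemma bnd_diff: "bnd f \<Longrightarrow> bnd g \<Longrightarrow> bnd (\<lambda>x. f x - g x)"
  using bnd_add[of f "\<lambda>x. - g x"] bnd_minus[of g] by simp

lemma bnd_power: "bnd f \<Longrightarrow> bnd (\<lambda>x. f x ^ n)"
  by (induction n) (auto intro: bnd_mult)

lemma dec_power: "dec f \<Longrightarrow> n > 0 \<Longrightarrow> dec (\<lambda>x. f x ^ n)"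
proof -
  assume d: "dec f" and n: "n > 0"
  then obtain m where m: "n = Suc m" by (cases n) auto
  have "dec (\<lambda>x. f x * f x ^ m)" using d by (intro dec_mult_bnd bnd_power dec_imp_bnd)
  then show ?thesis using m by simp
qed

lemma dec_divide: "dec f \<Longrightarrow> dec (\<lambda>x. f x / c)"
  using dec_mult_bnd[of f "\<lambda>x. 1/c"] bnd_const[of "1/c"] by simp

lemma bnd_divide: "bnd f \<Longrightarrow> bnd (\<lambda>x. f x / c)"
  using bnd_mult[of f "\<lambda>x. 1/c"] by auto

lemma dec_power2: "dec f \<Longrightarrow> dec (\<lambda>x. f x ^ 2)" by (rule dec_power) auto
lemma dec_power3: "dec f \<Longrightarrow> dec (\<lambda>x. f x ^ 3)" by (rule dec_power) auto

lemmas dec_rules = dec_power2 dec_power3 dec_mult_bnd bnd_mult_dec bnd_mult dec_add dec_minus dec_diff bnd_add bnd_minus bnd_diff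
  bnd_power dec_power dec_divide bnd_divide dec_imp_bnd bnd_const

lemma dec_tendsto: "dec f \<Longrightarrow> (f \<longlongrightarrow> 0) at_top"
proof -
  assume "dec f" then obtain K where K: "\<And>x. x \<ge> 0 \<Longrightarrow> \<bar>f x\<bar> \<le> K/(1+x)^2" unfolding dec_def by auto
  show ?thesis
  proof (rule Lim_null_comparison)
    show "\<forall>\<^sub>F x in at_top. norm (f x) \<le> K/(1+x)^2"
      using K by (auto intro: eventually_at_top_linorderI[of 0])
    show "((\<lambda>x. K/(1+x)^2) \<longlongrightarrow> 0) at_top" by real_asymp
  qed
qed

lemma decE: assumes "dec h" obtains K where "\<And>x. x \<ge> 0 \<Longrightarrow> norm (h x) \<le> K/(1+x)^2"
  using assms unfolding dec_def by auto

lemma bndE: assumes "bnd h" obtains K where "\<And>x. x \<ge> 0 \<Longrightarrow> norm (h x) \<le> K"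
  using assms unfolding bnd_def by auto

locale prof =
  fixes lam :: real and f0 f1 f2 f3 f4 :: "real \<Rightarrow> real"
  assumes lam: "\<bar>lam\<bar> = 1"
    and D0: "\<And>x. (f0 has_real_derivative f1 x) (at x)"
    and D1: "\<And>x. (f1 has_real_derivative f2 x) (at x)"
    and D2: "\<And>x. (f2 has_real_derivative f3 x) (at x)"
    and D3: "\<And>x. (f3 has_real_derivative f4 x) (at x)"
    and cont4: "continuous_on UNIV f4"
    and dec0: "dec f0" and dec1: "dec f1" and dec2: "dec f2" and dec3: "dec f3" and dec4: "dec f4"
begin

lemma DW0: "(f0 has_real_derivative f1 x) (at x within S)" using D0 by (rule DERIV_subset) auto
lemma DW1: "(f1 has_real_derivative f2 x) (at x within S)" using D1 by (rule DERIV_subset) auto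
lemma DW2: "(f2 has_real_derivative f3 x) (at x within S)" using D2 by (rule DERIV_subset) auto
lemma DW3: "(f3 has_real_derivative f4 x) (at x within S)" using D3 by (rule DERIV_subset) auto

lemma cont0: "continuous_on S f0" by (rule continuous_on_subset[OF has_real_derivative_imp_continuous_on[OF D0]]) auto
lemma cont1: "continuous_on S f1" by (rule continuous_on_subset[OF has_real_derivative_imp_continuous_on[OF D1]]) auto
lemma cont2: "continuous_on S f2" by (rule continuous_on_subset[OF has_real_derivative_imp_continuous_on[OF D2]]) auto
lemma cont3: "continuous_on S f3" by (rule continuous_on_subset[OF has_real_derivative_imp_continuous_on[OF D3]]) auto
lemma cont4': "continuous_on S f4" by (rule continuous_on_subset[OF cont4]) auto

lemmas cont_f = cont0 cont1 cont2 cont3 cont4'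

definition "P = (\<lambda>y. integral {y..} (\<lambda>\<xi>. f0 \<xi> ^ 2))"
definition "b1 = (\<lambda>y. - lam * P y)"
definition "a2 = (\<lambda>y. f0 y * b1 y - f1 y)"
definition "a2d = (\<lambda>y. f1 y * b1 y + lam * f0 y ^ 3 - f2 y)"
definition "a2dd = (\<lambda>y. f2 y * b1 y + 4 * lam * f0 y ^ 2 * f1 y - f3 y)"
definition "a2ddd = (\<lambda>y. f3 y * b1 y + 5 * lam * f0 y ^ 2 * f2 y + 8 * lam * f0 y * f1 y ^ 2 - f4 y)"
definition "b2 = (\<lambda>y. b1 y ^ 2 / 2 - lam * f0 y ^ 2 / 2)"
definition "b2d = (\<lambda>y. lam * f0 y * a2 y)"
definition "b2dd = (\<lambda>y. lam * (f1 y * a2 y + f0 y * a2d y))"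
definition "a3 = (\<lambda>y. f0 y * b2 y - a2d y)"
definition "a3d = (\<lambda>y. f1 y * b2 y + f0 y * b2d y - a2dd y)"
definition "a3dd = (\<lambda>y. f2 y * b2 y + 2 * f1 y * b2d y + f0 y * b2dd y - a2ddd y)"
definition "b3 = (\<lambda>y. - lam * integral {y..} (\<lambda>\<xi>. f0 \<xi> * a3 \<xi>))"
definition "a4 = (\<lambda>y. f0 y * b3 y - a3d y)"
definition "a4d = (\<lambda>y. f1 y * b3 y + f0 y * (lam * f0 y * a3 y) - a3dd y)"

lemma dec_f0sq: "dec (\<lambda>x. f0 x ^ 2)" using dec0 by (intro dec_power) auto

lemma dP: "x \<ge> 0 \<Longrightarrow> (P has_real_derivative (- (f0 x ^ 2))) (at x within {0..})"
proof -
  assume x: "x \<ge> 0"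
  obtain K where K: "\<And>x. x \<ge> 0 \<Longrightarrow> norm (f0 x ^ 2) \<le> K/(1+x)^2" using dec_f0sq by (rule decE) auto
  have c: "continuous_on {0..} (\<lambda>x. f0 x ^ 2)" by (intro continuous_intros cont0)
  show ?thesis unfolding P_def has_real_derivative_iff_has_vector_derivative
    by (rule tail_deriv[OF c K x]) auto
qed

lemma bndP: "bnd P"
proof -
  obtain K where K: "\<And>x. x \<ge> 0 \<Longrightarrow> norm (f0 x ^ 2) \<le> K/(1+x)^2" using dec_f0sq by (rule decE) auto
  have c: "continuous_on {0..} (\<lambda>x. f0 x ^ 2)" by (intro continuous_intros cont0)
  have K0: "K \<ge> 0" by (rule dec_bound_C[of "\<lambda>x. f0 x ^ 2" K, OF K]) auto
  have "\<bar>P x\<bar> \<le> K" if x: "x \<ge> 0" for x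
  proof -
    have "\<bar>P x\<bar> \<le> K/(1+x)" using tail_bound[OF c K x] unfolding P_def by auto
    also have "\<dots> \<le> K/1" using x K0 by (intro divide_left_mono) auto
    finally show ?thesis by simp
  qed
  then show ?thesis unfolding bnd_def by blast
qed

lemma limP: "(P \<longlongrightarrow> 0) at_top"
proof -
  obtain K where K: "\<And>x. x \<ge> 0 \<Longrightarrow> norm (f0 x ^ 2) \<le> K/(1+x)^2" using dec_f0sq by (rule decE) auto
  have c: "continuous_on {0..} (\<lambda>x. f0 x ^ 2)" by (intro continuous_intros cont0)
  show ?thesis using tail_lim[OF c K] unfolding P_def by (simp add: fun_eq_iff)
qed

lemma contP: "continuous_on {0..} P"
  by (rule DERIV_continuous_on[OF dP]) auto

lemma db1: "x \<ge> 0 \<Longrightarrow> (b1 has_real_derivative (lam * f0 x ^ 2)) (at x within {0..})"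
  unfolding b1_def by (auto intro!: derivative_eq_intros dP)

lemma da2: "x \<ge> 0 \<Longrightarrow> (a2 has_real_derivative a2d x) (at x within {0..})"
  unfolding a2_def a2d_def
  by (auto intro!: derivative_eq_intros db1 DW0 DW1 simp: power3_eq_cube power2_eq_square algebra_simps)

lemma da2d: "x \<ge> 0 \<Longrightarrow> (a2d has_real_derivative a2dd x) (at x within {0..})"
  unfolding a2d_def a2dd_def
  by (auto intro!: derivative_eq_intros db1 DW0 DW1 DW2 simp: power3_eq_cube power2_eq_square algebra_simps)

lemma da2dd: "x \<ge> 0 \<Longrightarrow> (a2dd has_real_derivative a2ddd x) (at x within {0..})"
  unfolding a2dd_def a2ddd_def
  by (auto intro!: derivative_eq_intros db1 DW0 DW1 DW2 DW3 simp: power3_eq_cube power2_eq_square algebra_simps)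

lemma db2: "x \<ge> 0 \<Longrightarrow> (b2 has_real_derivative b2d x) (at x within {0..})"
  unfolding b2_def b2d_def a2_def
  by (auto intro!: derivative_eq_intros db1 DW0 simp: power3_eq_cube power2_eq_square algebra_simps)

lemma db2d: "x \<ge> 0 \<Longrightarrow> (b2d has_real_derivative b2dd x) (at x within {0..})"
  unfolding b2d_def b2dd_def
  by (auto intro!: derivative_eq_intros da2 DW0 simp: algebra_simps)

lemma da3: "x \<ge> 0 \<Longrightarrow> (a3 has_real_derivative a3d x) (at x within {0..})"
  unfolding a3_def a3d_def
  by (auto intro!: derivative_eq_intros db2 da2d DW0 simp: algebra_simps)

lemma da3d: "x \<ge> 0 \<Longrightarrow> (a3d has_real_derivative a3dd x) (at x within {0..})"
  unfolding a3d_def a3dd_def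
  by (auto intro!: derivative_eq_intros db2 db2d da2dd DW0 DW1 simp: algebra_simps)

lemma contb1: "continuous_on {0..} b1" by (rule DERIV_continuous_on[OF db1]) auto
lemma conta2: "continuous_on {0..} a2" by (rule DERIV_continuous_on[OF da2]) auto
lemma conta2d: "continuous_on {0..} a2d" by (rule DERIV_continuous_on[OF da2d]) auto
lemma conta2dd: "continuous_on {0..} a2dd" by (rule DERIV_continuous_on[OF da2dd]) auto
lemma contb2: "continuous_on {0..} b2" by (rule DERIV_continuous_on[OF db2]) auto
lemma contb2d: "continuous_on {0..} b2d" by (rule DERIV_continuous_on[OF db2d]) auto
lemma conta3: "continuous_on {0..} a3" by (rule DERIV_continuous_on[OF da3]) auto
lemma conta3d: "continuous_on {0..} a3d" by (rule DERIV_continuous_on[OF da3d]) auto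
lemma conta2ddd: "continuous_on {0..} a2ddd"
  unfolding a2ddd_def by (intro continuous_intros cont_f contb1)
lemma contb2dd: "continuous_on {0..} b2dd"
  unfolding b2dd_def by (intro continuous_intros cont_f conta2 conta2d)
lemma conta3dd: "continuous_on {0..} a3dd"
  unfolding a3dd_def by (intro continuous_intros cont_f contb2 contb2d contb2dd conta2ddd)

lemma bndb1: "bnd b1" unfolding b1_def using bndP by (fast intro: dec_rules)
lemma deca2: "dec a2" unfolding a2_def using dec0 dec1 bndb1 by (fast intro: dec_rules)
lemma deca2d: "dec a2d" unfolding a2d_def using dec0 dec1 dec2 bndb1 by (fast intro: dec_rules)
lemma deca2dd: "dec a2dd" unfolding a2dd_def using dec0 dec1 dec2 dec3 bndb1 by (fast intro: dec_rules)
lemma deca2ddd: "dec a2ddd" unfolding a2ddd_def using dec0 dec1 dec2 dec3 dec4 bndb1 by (fast intro: dec_rules)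
lemma bndb2: "bnd b2" unfolding b2_def using dec0 bndb1 by (fast intro: dec_rules)
lemma decb2d: "dec b2d" unfolding b2d_def using dec0 deca2 by (fast intro: dec_rules)
lemma decb2dd: "dec b2dd" unfolding b2dd_def using dec0 dec1 deca2 deca2d by (fast intro: dec_rules)
lemma deca3: "dec a3" unfolding a3_def using dec0 bndb2 deca2d by (fast intro: dec_rules)
lemma deca3d: "dec a3d" unfolding a3d_def using dec0 dec1 bndb2 decb2d deca2dd by (fast intro: dec_rules)
lemma deca3dd: "dec a3dd" unfolding a3dd_def using dec0 dec1 dec2 bndb2 decb2d decb2dd deca2ddd by (fast intro: dec_rules)

end

context prof begin

lemma dec_f0a3: "dec (\<lambda>x. f0 x * a3 x)" using dec0 deca3 by (fast intro: dec_rules)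
lemma cont_f0a3: "continuous_on {0..} (\<lambda>x. f0 x * a3 x)" by (intro continuous_intros cont0 conta3)

lemma db3: "x \<ge> 0 \<Longrightarrow> (b3 has_real_derivative (lam * f0 x * a3 x)) (at x within {0..})"
proof -
  assume x: "x \<ge> 0"
  obtain K where K: "\<And>x. x \<ge> 0 \<Longrightarrow> norm (f0 x * a3 x) \<le> K/(1+x)^2" using dec_f0a3 by (rule decE) auto
  have "((\<lambda>y. integral {y..} (\<lambda>x. f0 x * a3 x)) has_real_derivative (- (f0 x * a3 x))) (at x within {0..})"
    unfolding has_real_derivative_iff_has_vector_derivative
    by (rule tail_deriv[OF cont_f0a3 K x]) auto
  then show ?thesis unfolding b3_def by (auto intro!: derivative_eq_intros)
qed

lemma bndb3: "bnd b3"
proof -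
  obtain K where K: "\<And>x. x \<ge> 0 \<Longrightarrow> norm (f0 x * a3 x) \<le> K/(1+x)^2" using dec_f0a3 by (rule decE) auto
  have K0: "K \<ge> 0" by (rule dec_bound_C[of "\<lambda>x. f0 x * a3 x" K, OF K]) auto
  have "\<bar>b3 x\<bar> \<le> K" if x: "x \<ge> 0" for x
  proof -
    have "\<bar>b3 x\<bar> = norm (integral {x..} (\<lambda>x. f0 x * a3 x))" using lam unfolding b3_def by (simp add: abs_mult)
    also have "\<dots> \<le> K/(1+x)" by (rule tail_bound[OF cont_f0a3 K x]) auto
    also have "\<dots> \<le> K/1" using x K0 by (intro divide_left_mono) auto
    finally show ?thesis by simp
  qed
  then show ?thesis unfolding bnd_def by blast
qed

lemma limb3: "(b3 \<longlongrightarrow> 0) at_top"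
proof -
  obtain K where K: "\<And>x. x \<ge> 0 \<Longrightarrow> norm (f0 x * a3 x) \<le> K/(1+x)^2" using dec_f0a3 by (rule decE) auto
  have "((\<lambda>y. - lam * integral {y..} (\<lambda>x. f0 x * a3 x)) \<longlongrightarrow> - lam * 0) at_top"
    by (intro tendsto_intros tail_lim[OF cont_f0a3 K]) auto
  then show ?thesis unfolding b3_def by simp
qed

lemma contb3: "continuous_on {0..} b3" by (rule DERIV_continuous_on[OF db3]) auto

lemma da4: "x \<ge> 0 \<Longrightarrow> (a4 has_real_derivative a4d x) (at x within {0..})"
  unfolding a4_def a4d_def
  by (auto intro!: derivative_eq_intros db3 da3d DW0 simp: algebra_simps)

lemma conta4: "continuous_on {0..} a4" by (rule DERIV_continuous_on[OF da4]) auto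
lemma conta4d: "continuous_on {0..} a4d"
  unfolding a4d_def by (intro continuous_intros cont_f contb3 conta3 conta3dd)

lemma deca4: "dec a4" unfolding a4_def using dec0 bndb3 deca3d by (fast intro: dec_rules)
lemma deca4d: "dec a4d" unfolding a4d_def using dec0 dec1 bndb3 deca3 deca3dd by (fast intro: dec_rules)

lemma limb1: "(b1 \<longlongrightarrow> 0) at_top"
proof -
  have "((\<lambda>y. - lam * P y) \<longlongrightarrow> - lam * 0) at_top" by (intro tendsto_intros limP)
  then show ?thesis unfolding b1_def by simp
qed

lemma limb2: "(b2 \<longlongrightarrow> 0) at_top"
proof -
  have "((\<lambda>y. b1 y ^ 2 / 2 - lam * f0 y ^ 2 / 2) \<longlongrightarrow> 0 ^ 2 / 2 - lam * 0 ^ 2 / 2) at_top"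
    by (intro tendsto_intros limb1 dec_tendsto dec0) auto
  then show ?thesis unfolding b2_def by simp
qed

end

definition cdec :: "(real \<Rightarrow> complex) \<Rightarrow> bool" where
  "cdec h \<longleftrightarrow> (\<exists>K. \<forall>x\<ge>0. norm (h x) \<le> K/(1+x)^2)"

lemma cdec_of_real: "dec h \<Longrightarrow> cdec (\<lambda>x. complex_of_real (h x) * c)"
proof -
  assume "dec h" then obtain K where K: "\<And>x. x \<ge> 0 \<Longrightarrow> norm (h x) \<le> K/(1+x)^2" by (rule decE) auto
  have "norm (complex_of_real (h x) * c) \<le> (K * norm c)/(1+x)^2" if "x \<ge> 0" for x
    using mult_right_mono[OF K[OF that], of "norm c"] by (simp add: norm_mult)
  then show ?thesis unfolding cdec_def by blast
qed

lemma cdec_of_real': "dec h \<Longrightarrow> cdec (\<lambda>x. complex_of_real (h x))"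
  using cdec_of_real[of h 1] by simp

lemma cdec_add: assumes "cdec f" "cdec g" shows "cdec (\<lambda>x. f x + g x)"
proof -
  obtain K where K: "\<And>x. x \<ge> 0 \<Longrightarrow> norm (f x) \<le> K/(1+x)^2" using assms(1) unfolding cdec_def by auto
  obtain L where L: "\<And>x. x \<ge> 0 \<Longrightarrow> norm (g x) \<le> L/(1+x)^2" using assms(2) unfolding cdec_def by auto
  have "norm (f x + g x) \<le> (K+L)/(1+x)^2" if "x \<ge> 0" for x
    using K[OF that] L[OF that] norm_triangle_ineq[of "f x" "g x"] by (simp add: add_divide_distrib)
  then show ?thesis unfolding cdec_def by blast
qed

lemma cdec_mult1: assumes "\<And>x. x \<ge> 0 \<Longrightarrow> norm (e x) \<le> 1" "cdec g" shows "cdec (\<lambda>x. e x * g x)"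
proof -
  obtain L where L: "\<And>x. x \<ge> 0 \<Longrightarrow> norm (g x) \<le> L/(1+x)^2" using assms(2) unfolding cdec_def by auto
  have "norm (e x * g x) \<le> L/(1+x)^2" if "x \<ge> 0" for x
    using mult_mono[OF assms(1)[OF that] L[OF that]] by (simp add: norm_mult)
  then show ?thesis unfolding cdec_def by blast
qed

definition cbnd :: "(real \<Rightarrow> complex) \<Rightarrow> bool" where
  "cbnd h \<longleftrightarrow> (\<exists>K. \<forall>x\<ge>0. norm (h x) \<le> K)"

lemma cbnd_of_real: "bnd h \<Longrightarrow> cbnd (\<lambda>x. complex_of_real (h x) * c)"
proof -
  assume "bnd h" then obtain K where K: "\<And>x. x \<ge> 0 \<Longrightarrow> norm (h x) \<le> K" by (rule bndE) auto
  have "norm (complex_of_real (h x) * c) \<le> K * norm c" if "x \<ge> 0" for x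
    using mult_right_mono[OF K[OF that], of "norm c"] by (simp add: norm_mult)
  then show ?thesis unfolding cbnd_def by blast
qed

lemma cbnd_add: assumes "cbnd f" "cbnd g" shows "cbnd (\<lambda>x. f x + g x)"
proof -
  obtain K where K: "\<And>x. x \<ge> 0 \<Longrightarrow> norm (f x) \<le> K" using assms(1) unfolding cbnd_def by auto
  obtain L where L: "\<And>x. x \<ge> 0 \<Longrightarrow> norm (g x) \<le> L" using assms(2) unfolding cbnd_def by auto
  have "norm (f x + g x) \<le> K+L" if "x \<ge> 0" for x
    using K[OF that] L[OF that] norm_triangle_ineq[of "f x" "g x"] by simp
  then show ?thesis unfolding cbnd_def by blast
qed

lemma cbnd_const: "cbnd (\<lambda>x. c)" unfolding cbnd_def by auto

lemma exp_osc_deriv: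
  fixes k :: complex and x :: real
  shows "((\<lambda>\<xi>. exp (2 * \<i> * k * complex_of_real (\<xi> - x))) has_vector_derivative
           (2 * \<i> * k * exp (2 * \<i> * k * complex_of_real (\<xi> - x)))) (at \<xi> within S)"
proof -
  have "((\<lambda>w. exp (2 * \<i> * k * (w - complex_of_real x))) has_field_derivative
           (exp (2 * \<i> * k * (complex_of_real \<xi> - complex_of_real x)) * (2 * \<i> * k))) (at (complex_of_real \<xi>))"
    by (auto intro!: derivative_eq_intros)
  from has_vector_derivative_real_field[OF this, where s=S]
  show ?thesis by (simp add: mult.commute of_real_diff)
qed

lemma cont_exp_osc: "continuous_on S (\<lambda>\<xi>. exp (2 * \<i> * k * complex_of_real (\<xi> - x)))"
  by (intro continuous_intros)

context prof begin

definition "zz k = (- \<i>/2) / k"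
definition "Ut k y = complex_of_real (f0 y) * zz k + complex_of_real (a2 y) * zz k^2
   + complex_of_real (a3 y) * zz k^3 + complex_of_real (a4 y) * zz k^4"
definition "Ud k y = complex_of_real (f1 y) * zz k + complex_of_real (a2d y) * zz k^2
   + complex_of_real (a3d y) * zz k^3 + complex_of_real (a4d y) * zz k^4"
definition "Vt k y = 1 + complex_of_real (b1 y) * zz k + complex_of_real (b2 y) * zz k^2
   + complex_of_real (b3 y) * zz k^3"
definition "Vd k y = complex_of_real (lam * f0 y ^ 2) * zz k + complex_of_real (b2d y) * zz k^2
   + complex_of_real (lam * f0 y * a3 y) * zz k^3"

lemma dUt: "x \<ge> 0 \<Longrightarrow> (Ut k has_vector_derivative Ud k x) (at x within {0..})"
  unfolding Ut_def[abs_def] Ud_def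
  by (auto intro!: derivative_eq_intros DW0 da2 da3 da4)

lemma dVt: "x \<ge> 0 \<Longrightarrow> (Vt k has_vector_derivative Vd k x) (at x within {0..})"
  unfolding Vt_def[abs_def] Vd_def
  by (auto intro!: derivative_eq_intros db1 db2 db3)

lemma zz_rel: "k \<noteq> 0 \<Longrightarrow> 2 * \<i> * k * zz k = 1"
  unfolding zz_def by (simp add: field_simps)

lemma key_U: assumes k: "k \<noteq> 0"
  shows "2 * \<i> * k * Ut k y + Ud k y = complex_of_real (f0 y) * Vt k y + complex_of_real (a4d y) * zz k ^ 4"
proof -
  define w where "w = zz k"
  have h: "2 * \<i> * k * w = 1" unfolding w_def by (rule zz_rel[OF k])
  have "2 * \<i> * k * Ut k y = (2 * \<i> * k * w) * (complex_of_real (f0 y) + complex_of_real (a2 y) * w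
     + complex_of_real (a3 y) * w^2 + complex_of_real (a4 y) * w^3)"
    unfolding Ut_def w_def[symmetric] by algebra
  also have "\<dots> = complex_of_real (f0 y) + complex_of_real (a2 y) * w
     + complex_of_real (a3 y) * w^2 + complex_of_real (a4 y) * w^3" using h by simp
  finally show ?thesis
    unfolding Ud_def Vt_def w_def[symmetric]
    by (simp add: a2_def a3_def a4_def algebra_simps power2_eq_square power3_eq_cube)
qed

lemma key_V:
  shows "complex_of_real lam * complex_of_real (f0 y) * Ut k y = Vd k y + complex_of_real (lam * f0 y * a4 y) * zz k ^ 4"
  unfolding Ut_def Vd_def b2d_def by (simp add: algebra_simps power2_eq_square)

end

context prof begin

lemma dec_someI: assumes "dec h" shows "\<forall>x\<ge>0. \<bar>h x\<bar> \<le> (SOME K. \<forall>x\<ge>0. \<bar>h x\<bar> \<le> K/(1+x)^2)/(1+x)^2"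
  using assms unfolding dec_def by (rule someI_ex)

definition "C0 = (SOME K. \<forall>x\<ge>0. \<bar>f0 x\<bar> \<le> K/(1+x)^2)"
definition "K4 = (SOME K. \<forall>x\<ge>0. \<bar>a4d x\<bar> \<le> K/(1+x)^2)"
definition "K5 = (SOME K. \<forall>x\<ge>0. \<bar>lam * f0 x * a4 x\<bar> \<le> K/(1+x)^2)"

lemma C0: "x \<ge> 0 \<Longrightarrow> \<bar>f0 x\<bar> \<le> C0/(1+x)^2" using dec_someI[OF dec0] unfolding C0_def by blast
lemma K4: "x \<ge> 0 \<Longrightarrow> \<bar>a4d x\<bar> \<le> K4/(1+x)^2" using dec_someI[OF deca4d] unfolding K4_def by blast
lemma dec_K5: "dec (\<lambda>x. lam * f0 x * a4 x)" using dec0 deca4 by (fast intro: dec_rules)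
lemma K5: "x \<ge> 0 \<Longrightarrow> \<bar>lam * f0 x * a4 x\<bar> \<le> K5/(1+x)^2" using dec_someI[OF dec_K5] unfolding K5_def by blast

lemma C0_nonneg: "C0 \<ge> 0" using C0[of 0] by simp
lemma K4_nonneg: "K4 \<ge> 0" using K4[of 0] by simp
lemma K5_nonneg: "K5 \<ge> 0" using K5[of 0] by simp

lemma contUt: "continuous_on {0..} (Ut k)"
  unfolding Ut_def[abs_def] by (intro continuous_intros cont_f conta2 conta3 conta4)
lemma contVt: "continuous_on {0..} (Vt k)"
  unfolding Vt_def[abs_def] by (intro continuous_intros contb1 contb2 contb3)
lemma contVd: "continuous_on {0..} (Vd k)"
  unfolding Vd_def[abs_def] by (intro continuous_intros cont_f contb2d conta3)

lemma cdec_inner: "cdec (\<lambda>\<xi>. complex_of_real (f0 \<xi>) * Vt k \<xi> + complex_of_real (a4d \<xi>) * zz k ^ 4)"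
proof -
  have eq: "(\<lambda>\<xi>. complex_of_real (f0 \<xi>) * Vt k \<xi> + complex_of_real (a4d \<xi>) * zz k ^ 4) =
    (\<lambda>\<xi>. complex_of_real (f0 \<xi>) * 1 + complex_of_real (f0 \<xi> * b1 \<xi>) * zz k + complex_of_real (f0 \<xi> * b2 \<xi>) * zz k^2
      + complex_of_real (f0 \<xi> * b3 \<xi>) * zz k^3 + complex_of_real (a4d \<xi>) * zz k ^ 4)"
    unfolding Vt_def by (simp add: algebra_simps fun_eq_iff)
  have d1: "dec (\<lambda>\<xi>. f0 \<xi> * b1 \<xi>)" using dec0 bndb1 by (fast intro: dec_rules)
  have d2: "dec (\<lambda>\<xi>. f0 \<xi> * b2 \<xi>)" using dec0 bndb2 by (fast intro: dec_rules)
  have d3: "dec (\<lambda>\<xi>. f0 \<xi> * b3 \<xi>)" using dec0 bndb3 by (fast intro: dec_rules)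
  show ?thesis unfolding eq
    by (intro cdec_add cdec_of_real dec0 d1 d2 d3 deca4d)
qed

lemma cdec_Vd: "cdec (Vd k)"
proof -
  have d1: "dec (\<lambda>\<xi>. lam * f0 \<xi> ^ 2)" using dec0 by (fast intro: dec_rules)
  have d3: "dec (\<lambda>\<xi>. lam * f0 \<xi> * a3 \<xi>)" using dec0 deca3 by (fast intro: dec_rules)
  show ?thesis unfolding Vd_def[abs_def]
    by (intro cdec_add cdec_of_real d1 d3 decb2d)
qed

lemma lim_Ut: "(Ut k \<longlongrightarrow> 0) at_top"
proof -
  have "((\<lambda>y. complex_of_real (f0 y) * zz k + complex_of_real (a2 y) * zz k^2
   + complex_of_real (a3 y) * zz k^3 + complex_of_real (a4 y) * zz k^4) \<longlongrightarrow>
    complex_of_real 0 * zz k + complex_of_real 0 * zz k^2 + complex_of_real 0 * zz k^3 + complex_of_real 0 * zz k^4) at_top"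
    by (intro tendsto_intros dec_tendsto dec0 deca2 deca3 deca4)
  then show ?thesis unfolding Ut_def[abs_def] by simp
qed

lemma lim_Vt: "(Vt k \<longlongrightarrow> 1) at_top"
proof -
  have "((\<lambda>y. 1 + complex_of_real (b1 y) * zz k + complex_of_real (b2 y) * zz k^2
   + complex_of_real (b3 y) * zz k^3) \<longlongrightarrow>
    1 + complex_of_real 0 * zz k + complex_of_real 0 * zz k^2 + complex_of_real 0 * zz k^3) at_top"
    by (intro tendsto_intros limb1 limb2 limb3)
  then show ?thesis unfolding Vt_def[abs_def] by simp
qed

lemma cbnd_Ut: "cbnd (Ut k)"
  unfolding Ut_def[abs_def]
  by (intro cbnd_add cbnd_of_real dec_imp_bnd dec0 deca2 deca3 deca4)

lemma cbnd_Vt: "cbnd (Vt k)"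
  unfolding Vt_def[abs_def]
  by (intro cbnd_add cbnd_of_real cbnd_const bndb1 bndb2 bndb3)

lemma approx_U:
  assumes k: "k \<noteq> 0" "Im k \<ge> 0" and x: "x \<ge> 0"
  shows "((\<lambda>\<xi>. exp (2 * \<i> * k * complex_of_real (\<xi> - x)) * complex_of_real (f0 \<xi>) * Vt k \<xi>) has_integral
     (- Ut k x - zz k ^ 4 * integral {x..} (\<lambda>\<xi>. exp (2 * \<i> * k * complex_of_real (\<xi> - x)) * complex_of_real (a4d \<xi>)))) {x..}"
proof -
  define E where "E = (\<lambda>\<xi>. exp (2 * \<i> * k * complex_of_real (\<xi> - x)))"
  define inner where "inner = (\<lambda>\<xi>. complex_of_real (f0 \<xi>) * Vt k \<xi> + complex_of_real (a4d \<xi>) * zz k ^ 4)"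
  have Eb: "norm (E \<xi>) \<le> 1" if "\<xi> \<ge> x" for \<xi> unfolding E_def using norm_exp_osc[OF k(2), of "\<xi> - x"] that by simp
  have sub: "{x..} \<subseteq> {0..}" using x by auto
  obtain Ki where Ki: "\<And>\<xi>. \<xi> \<ge> 0 \<Longrightarrow> norm (inner \<xi>) \<le> Ki/(1+\<xi>)^2"
    using cdec_inner[of k] unfolding cdec_def inner_def by auto
  have i1: "((\<lambda>\<xi>. E \<xi> * inner \<xi>) has_integral (0 - E x * Ut k x)) {x..}"
  proof (rule improper_FTC[where C=Ki])
    show "x \<ge> 0" by (rule x)
    show "continuous_on {x..} (\<lambda>\<xi>. E \<xi> * inner \<xi>)"
      unfolding E_def inner_def
      by (intro continuous_intros continuous_on_subset[OF cont0 sub] continuous_on_subset[OF contVt sub]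
            continuous_on_subset[OF conta4d sub])
    show "norm (E \<xi> * inner \<xi>) \<le> Ki/(1+\<xi>)^2" if "\<xi> \<ge> x" for \<xi>
      using mult_mono[OF Eb[OF that] Ki, of \<xi>] that x by (simp add: norm_mult)
    show "((\<lambda>\<xi>. E \<xi> * Ut k \<xi>) has_vector_derivative E \<xi> * inner \<xi>) (at \<xi> within {x..})" if "\<xi> \<ge> x" for \<xi>
    proof -
      have d1: "(Ut k has_vector_derivative Ud k \<xi>) (at \<xi> within {x..})"
        using dUt[of \<xi> k] that x by (auto intro: has_vector_derivative_within_subset[OF _ sub])
      have "((\<lambda>\<xi>. E \<xi> * Ut k \<xi>) has_vector_derivative (E \<xi> * Ud k \<xi> + (2 * \<i> * k * E \<xi>) * Ut k \<xi>)) (at \<xi> within {x..})"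
        unfolding E_def by (intro has_vector_derivative_mult exp_osc_deriv d1)
      moreover have "E \<xi> * Ud k \<xi> + (2 * \<i> * k * E \<xi>) * Ut k \<xi> = E \<xi> * (2 * \<i> * k * Ut k \<xi> + Ud k \<xi>)"
        by (simp add: algebra_simps)
      moreover have "\<dots> = E \<xi> * inner \<xi>"
        unfolding key_U[OF k(1)] inner_def ..
      ultimately show ?thesis by simp
    qed
    show "((\<lambda>\<xi>. E \<xi> * Ut k \<xi>) \<longlongrightarrow> 0) at_top"
    proof (rule Lim_null_comparison)
      show "\<forall>\<^sub>F \<xi> in at_top. norm (E \<xi> * Ut k \<xi>) \<le> norm (Ut k \<xi>)"
        using eventually_ge_at_top[of x]
        by eventually_elim (use Eb in \<open>auto simp: norm_mult intro: mult_left_le_one_le\<close>)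
      show "((\<lambda>\<xi>. norm (Ut k \<xi>)) \<longlongrightarrow> 0) at_top"
        using tendsto_norm[OF lim_Ut[of k]] by simp
    qed
  qed
  have Ex: "E x = 1" unfolding E_def by simp
  have i2: "(\<lambda>\<xi>. E \<xi> * complex_of_real (a4d \<xi>)) integrable_on {x..}"
  proof (rule dec_integrable[where C=K4])
    show "continuous_on {x..} (\<lambda>\<xi>. E \<xi> * complex_of_real (a4d \<xi>))"
      unfolding E_def by (intro continuous_intros continuous_on_subset[OF conta4d sub])
    show "norm (E \<xi> * complex_of_real (a4d \<xi>)) \<le> K4/(1+\<xi>)^2" if "\<xi> \<ge> x" for \<xi>
      using mult_mono[OF Eb[OF that] K4, of \<xi>] that x by (simp add: norm_mult)
  qed (rule x)
  have "((\<lambda>\<xi>. E \<xi> * inner \<xi> - zz k ^ 4 * (E \<xi> * complex_of_real (a4d \<xi>))) has_integral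
        ((0 - E x * Ut k x) - zz k ^ 4 * integral {x..} (\<lambda>\<xi>. E \<xi> * complex_of_real (a4d \<xi>)))) {x..}"
    by (intro has_integral_diff i1 has_integral_mult_right integrable_integral i2)
  moreover have "(\<lambda>\<xi>. E \<xi> * inner \<xi> - zz k ^ 4 * (E \<xi> * complex_of_real (a4d \<xi>))) =
      (\<lambda>\<xi>. E \<xi> * complex_of_real (f0 \<xi>) * Vt k \<xi>)"
    unfolding inner_def by (simp add: algebra_simps fun_eq_iff)
  ultimately show ?thesis unfolding Ex E_def by simp
qed

lemma approx_V:
  assumes x: "x \<ge> 0"
  shows "((\<lambda>\<xi>. complex_of_real lam * complex_of_real (f0 \<xi>) * Ut k \<xi>) has_integral
     (1 - Vt k x + zz k ^ 4 * integral {x..} (\<lambda>\<xi>. complex_of_real (lam * f0 \<xi> * a4 \<xi>)))) {x..}"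
proof -
  have sub: "{x..} \<subseteq> {0..}" using x by auto
  obtain Ki where Ki: "\<And>\<xi>. \<xi> \<ge> 0 \<Longrightarrow> norm (Vd k \<xi>) \<le> Ki/(1+\<xi>)^2"
    using cdec_Vd[of k] unfolding cdec_def by auto
  have i1: "(Vd k has_integral (1 - Vt k x)) {x..}"
  proof (rule improper_FTC[where C=Ki])
    show "continuous_on {x..} (Vd k)" by (rule continuous_on_subset[OF contVd sub])
    show "norm (Vd k \<xi>) \<le> Ki/(1+\<xi>)^2" if "\<xi> \<ge> x" for \<xi> using Ki[of \<xi>] that x by simp
    show "(Vt k has_vector_derivative Vd k \<xi>) (at \<xi> within {x..})" if "\<xi> \<ge> x" for \<xi>
      using dVt[of \<xi> k] that x by (auto intro: has_vector_derivative_within_subset[OF _ sub])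
  qed (use x lim_Vt in auto)
  have i2: "(\<lambda>\<xi>. complex_of_real (lam * f0 \<xi> * a4 \<xi>)) integrable_on {x..}"
  proof (rule dec_integrable[where C=K5])
    show "continuous_on {x..} (\<lambda>\<xi>. complex_of_real (lam * f0 \<xi> * a4 \<xi>))"
      by (intro continuous_intros continuous_on_subset[OF cont0 sub] continuous_on_subset[OF conta4 sub])
    show "norm (complex_of_real (lam * f0 \<xi> * a4 \<xi>)) \<le> K5/(1+\<xi>)^2" if "\<xi> \<ge> x" for \<xi>
      using K5[of \<xi>] that x by (simp add: norm_mult abs_mult)
  qed (rule x)
  have "((\<lambda>\<xi>. Vd k \<xi> + zz k ^ 4 * complex_of_real (lam * f0 \<xi> * a4 \<xi>)) has_integral
        ((1 - Vt k x) + zz k ^ 4 * integral {x..} (\<lambda>\<xi>. complex_of_real (lam * f0 \<xi> * a4 \<xi>)))) {x..}"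
    by (intro has_integral_add i1 has_integral_mult_right integrable_integral i2)
  moreover have "(\<lambda>\<xi>. Vd k \<xi> + zz k ^ 4 * complex_of_real (lam * f0 \<xi> * a4 \<xi>)) =
      (\<lambda>\<xi>. complex_of_real lam * complex_of_real (f0 \<xi>) * Ut k \<xi>)"
    using key_V by (simp add: algebra_simps fun_eq_iff)
  ultimately show ?thesis by simp
qed

end

context prof begin

lemma int_bound_U:
  assumes k: "Im k \<ge> 0" and x: "x \<ge> 0"
  shows "norm (integral {x..} (\<lambda>\<xi>. exp (2 * \<i> * k * complex_of_real (\<xi> - x)) * complex_of_real (a4d \<xi>))) \<le> K4"
proof -
  define E where "E = (\<lambda>\<xi>. exp (2 * \<i> * k * complex_of_real (\<xi> - x)))"
  have Eb: "norm (E \<xi>) \<le> 1" if "\<xi> \<ge> x" for \<xi> unfolding E_def using norm_exp_osc[OF k, of "\<xi> - x"] that by simp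
  have sub: "{x..} \<subseteq> {0..}" using x by auto
  have bd: "norm (E \<xi> * complex_of_real (a4d \<xi>)) \<le> K4/(1+\<xi>)^2" if "\<xi> \<ge> x" for \<xi>
      using mult_mono[OF Eb[OF that] K4, of \<xi>] that x by (simp add: norm_mult)
  have i2: "(\<lambda>\<xi>. E \<xi> * complex_of_real (a4d \<xi>)) integrable_on {x..}"
  proof (rule dec_integrable[where C=K4])
    show "continuous_on {x..} (\<lambda>\<xi>. E \<xi> * complex_of_real (a4d \<xi>))"
      unfolding E_def by (intro continuous_intros continuous_on_subset[OF conta4d sub])
  qed (use x bd in auto)
  have "norm (integral {x..} (\<lambda>\<xi>. E \<xi> * complex_of_real (a4d \<xi>))) \<le> integral {x..} (\<lambda>\<xi>. K4/(1+\<xi>)^2)"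
    using i2 dec_integrable_aux[OF x K4_nonneg] bd by (intro integral_norm_bound_integral) auto
  also have "\<dots> = K4/(1+x)" using dec_integrable_aux[OF x K4_nonneg] by (rule integral_unique)
  also have "\<dots> \<le> K4/1" using x K4_nonneg by (intro divide_left_mono) auto
  finally show ?thesis unfolding E_def by simp
qed

lemma int_bound_V:
  assumes x: "x \<ge> 0"
  shows "norm (integral {x..} (\<lambda>\<xi>. complex_of_real (lam * f0 \<xi> * a4 \<xi>))) \<le> K5"
proof -
  have sub: "{x..} \<subseteq> {0..}" using x by auto
  have bd: "norm (complex_of_real (lam * f0 \<xi> * a4 \<xi>)) \<le> K5/(1+\<xi>)^2" if "\<xi> \<ge> x" for \<xi>
    using K5[of \<xi>] that x by (simp add: norm_mult abs_mult)
  have i2: "(\<lambda>\<xi>. complex_of_real (lam * f0 \<xi> * a4 \<xi>)) integrable_on {x..}"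
  proof (rule dec_integrable[where C=K5])
    show "continuous_on {x..} (\<lambda>\<xi>. complex_of_real (lam * f0 \<xi> * a4 \<xi>))"
      by (intro continuous_intros continuous_on_subset[OF cont0 sub] continuous_on_subset[OF conta4 sub])
  qed (use x bd in auto)
  have "norm (integral {x..} (\<lambda>\<xi>. complex_of_real (lam * f0 \<xi> * a4 \<xi>))) \<le> integral {x..} (\<lambda>\<xi>. K5/(1+\<xi>)^2)"
    using i2 dec_integrable_aux[OF x K5_nonneg] bd by (intro integral_norm_bound_integral) auto
  also have "\<dots> = K5/(1+x)" using dec_integrable_aux[OF x K5_nonneg] by (rule integral_unique)
  also have "\<dots> \<le> K5/1" using x K5_nonneg by (intro divide_left_mono) auto
  finally show ?thesis by simp
qed

definition "KK = 2 * (K4 + K5) * exp (2 * C0)"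

lemma expansion:
  fixes u v :: "real \<Rightarrow> complex" and M :: real
  assumes k: "k \<noteq> 0" "Im k \<ge> 0"
    and ub: "\<And>x. x \<ge> 0 \<Longrightarrow> norm (u x) \<le> M" and vb: "\<And>x. x \<ge> 0 \<Longrightarrow> norm (v x) \<le> M"
    and iu: "\<And>x. x \<ge> 0 \<Longrightarrow> ((\<lambda>\<xi>. exp (2 * \<i> * k * complex_of_real (\<xi> - x)) * complex_of_real (f0 \<xi>) * v \<xi>)
               has_integral (- u x)) {x..}"
    and iv: "\<And>x. x \<ge> 0 \<Longrightarrow> ((\<lambda>\<xi>. complex_of_real lam * complex_of_real (f0 \<xi>) * u \<xi>)
               has_integral (1 - v x)) {x..}"
  shows "norm (u 0 - Ut k 0) \<le> KK * norm (zz k) ^ 4 \<and> norm (v 0 - Vt k 0) \<le> KK * norm (zz k) ^ 4"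
proof -
  obtain MU where MU: "\<And>x. x \<ge> 0 \<Longrightarrow> norm (Ut k x) \<le> MU" using cbnd_Ut[of k] unfolding cbnd_def by auto
  obtain MV where MV: "\<And>x. x \<ge> 0 \<Longrightarrow> norm (Vt k x) \<le> MV" using cbnd_Vt[of k] unfolding cbnd_def by auto
  define eu where "eu = (\<lambda>x. u x - Ut k x)"
  define ev where "ev = (\<lambda>x. v x - Vt k x)"
  define Fu where "Fu = (\<lambda>x. zz k ^ 4 * integral {x..} (\<lambda>\<xi>. exp (2 * \<i> * k * complex_of_real (\<xi> - x)) * complex_of_real (a4d \<xi>)))"
  define Fv where "Fv = (\<lambda>x. - (zz k ^ 4 * integral {x..} (\<lambda>\<xi>. complex_of_real (lam * f0 \<xi> * a4 \<xi>))))"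
  have "norm (eu 0) \<le> 2 * (norm (zz k) ^ 4 * (K4 + K5)) * exp (2*C0) \<and> norm (ev 0) \<le> 2 * (norm (zz k) ^ 4 * (K4 + K5)) * exp (2*C0)"
  proof (rule stability[where f=f0 and lam=lam and M="M + MU + MV" and Fu=Fu and Fv=Fv])
    show "Im k \<ge> 0" by (rule k)
    show "\<bar>lam\<bar> = 1" by (rule lam)
    show "C0 \<ge> 0" by (rule C0_nonneg)
    show "\<bar>f0 x\<bar> \<le> C0/(1+x)^2" if "x \<ge> 0" for x using C0 that by blast
    show "norm (eu x) \<le> M + MU + MV" if "x \<ge> 0" for x
      unfolding eu_def using norm_triangle_ineq4[of "u x" "Ut k x"] ub[OF that] MU[OF that] MV[OF that]
        norm_ge_zero[of "Vt k x"] by linarith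
    show "norm (ev x) \<le> M + MU + MV" if "x \<ge> 0" for x
      unfolding ev_def using norm_triangle_ineq4[of "v x" "Vt k x"] vb[OF that] MU[OF that] MV[OF that]
        norm_ge_zero[of "Ut k x"] by linarith
    show "((\<lambda>\<xi>. exp (2 * \<i> * k * complex_of_real (\<xi> - x)) * complex_of_real (f0 \<xi>) * ev \<xi>) has_integral (Fu x - eu x)) {x..}"
      if x: "x \<ge> 0" for x
    proof -
      have "((\<lambda>\<xi>. exp (2 * \<i> * k * complex_of_real (\<xi> - x)) * complex_of_real (f0 \<xi>) * v \<xi>
             - exp (2 * \<i> * k * complex_of_real (\<xi> - x)) * complex_of_real (f0 \<xi>) * Vt k \<xi>) has_integral
             (- u x - (- Ut k x - zz k ^ 4 * integral {x..} (\<lambda>\<xi>. exp (2 * \<i> * k * complex_of_real (\<xi> - x)) * complex_of_real (a4d \<xi>))))) {x..}"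
        by (intro has_integral_diff iu x approx_U k)
      then show ?thesis unfolding ev_def eu_def Fu_def by (simp add: algebra_simps)
    qed
    show "((\<lambda>\<xi>. complex_of_real lam * complex_of_real (f0 \<xi>) * eu \<xi>) has_integral (Fv x - ev x)) {x..}"
      if x: "x \<ge> 0" for x
    proof -
      have "((\<lambda>\<xi>. complex_of_real lam * complex_of_real (f0 \<xi>) * u \<xi>
             - complex_of_real lam * complex_of_real (f0 \<xi>) * Ut k \<xi>) has_integral
             ((1 - v x) - (1 - Vt k x + zz k ^ 4 * integral {x..} (\<lambda>\<xi>. complex_of_real (lam * f0 \<xi> * a4 \<xi>))))) {x..}"
        by (intro has_integral_diff iv x approx_V)
      then show ?thesis unfolding ev_def eu_def Fv_def by (simp add: algebra_simps)
    qed
    show "norm (Fu x) \<le> norm (zz k) ^ 4 * (K4 + K5)" if x: "x \<ge> 0" for x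
    proof -
      have "norm (Fu x) \<le> norm (zz k) ^ 4 * K4"
        unfolding Fu_def norm_mult norm_power
        by (intro mult_left_mono int_bound_U k x) auto
      also have "\<dots> \<le> norm (zz k) ^ 4 * (K4 + K5)" using K5_nonneg by (intro mult_left_mono) auto
      finally show ?thesis .
    qed
    show "norm (Fv x) \<le> norm (zz k) ^ 4 * (K4 + K5)" if x: "x \<ge> 0" for x
    proof -
      have "norm (Fv x) \<le> norm (zz k) ^ 4 * K5"
        unfolding Fv_def norm_minus_cancel norm_mult norm_power
        by (intro mult_left_mono int_bound_V k x) auto
      also have "\<dots> \<le> norm (zz k) ^ 4 * (K4 + K5)" using K4_nonneg by (intro mult_left_mono) auto
      finally show ?thesis .
    qed
  qed simp
  then show ?thesis unfolding eu_def ev_def KK_def by (simp add: algebra_simps)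
qed

end

lemma pder_dx:
  assumes "smooth2 q"
  shows "((\<lambda>y. pder ds q y t) has_real_derivative pder (True # ds) q x t) (at x)"
proof -
  have "(\<lambda>y. pder ds q y t) differentiable (at x)" using assms unfolding smooth2_def by blast
  then show ?thesis by (simp add: pdx_def DERIV_deriv_iff_real_differentiable)
qed

lemma pder_dt:
  assumes "smooth2 q"
  shows "((\<lambda>s. pder ds q x s) has_real_derivative pder (False # ds) q x t) (at t)"
proof -
  have "(\<lambda>s. pder ds q x s) differentiable (at t)" using assms unfolding smooth2_def by blast
  then show ?thesis by (simp add: pdt_def DERIV_deriv_iff_real_differentiable)
qed

lemma pder_cont2:
  assumes "smooth2 q"
  shows "continuous_on S (\<lambda>z. pder ds q (fst z) (snd z))"
  using assms unfolding smooth2_def by (blast intro: continuous_on_subset)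

lemma pder_cont_x:
  assumes "smooth2 q"
  shows "continuous_on S (\<lambda>x. pder ds q x s)"
proof -
  have "continuous_on S ((\<lambda>z. pder ds q (fst z) (snd z)) \<circ> (\<lambda>x. (x, s)))"
    by (intro continuous_on_compose continuous_intros pder_cont2[OF assms])
  then show ?thesis by (simp add: o_def)
qed

lemma pder_cont_t:
  assumes "smooth2 q"
  shows "continuous_on S (\<lambda>s. pder ds q x s)"
proof -
  have "continuous_on S ((\<lambda>z. pder ds q (fst z) (snd z)) \<circ> (\<lambda>s. (x, s)))"
    by (intro continuous_on_compose continuous_intros pder_cont2[OF assms])
  then show ?thesis by (simp add: o_def)
qed

lemma pder_decay:
  assumes "rapid_decay q T"
  obtains C where "\<And>x s. x \<ge> 0 \<Longrightarrow> s \<in> {0..T} \<Longrightarrow> \<bar>pder ds q x s\<bar> \<le> C/(1+x)^2"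
proof -
  obtain C where C: "\<And>x s. x \<ge> 0 \<Longrightarrow> s \<in> {0..T} \<Longrightarrow> (1+x)^2 * \<bar>pder ds q x s\<bar> \<le> C"
    using assms unfolding rapid_decay_def by meson
  have "\<bar>pder ds q x s\<bar> \<le> C/(1+x)^2" if "x \<ge> 0" "s \<in> {0..T}" for x s
    using C[OF that] that by (simp add: field_simps)
  then show ?thesis using that by blast
qed

lemma int_split_dec:
  fixes g :: "real \<Rightarrow> 'a::euclidean_space"
  assumes cont: "continuous_on {0..} g" and bnd: "\<And>x. x \<ge> 0 \<Longrightarrow> norm (g x) \<le> C/(1+x)^2"
    and y: "y \<ge> 0"
  shows "integral {0..y} g = integral {0..} g - integral {y..} g"
proof -
  have intg: "g integrable_on {y..}"
  proof (rule dec_integrable[OF y _ bnd])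
    show "continuous_on {y..} g" by (rule continuous_on_subset[OF cont]) (use y in auto)
  qed (use y in auto)
  have i1: "(g has_integral integral {0..y} g) {0..y}"
    using y by (intro integrable_integral integrable_continuous_interval continuous_on_subset[OF cont]) auto
  have i2: "(g has_integral integral {y..} g) {y..}" using intg by (rule integrable_integral)
  have "{0..y} \<inter> {y..} = {y}" using y by auto
  then have "(g has_integral (integral {0..y} g + integral {y..} g)) ({0..y} \<union> {y..})"
    by (intro has_integral_Un[OF i1 i2]) auto
  moreover have "{0..y} \<union> {y..} = {0..}" using y by auto
  ultimately show ?thesis by (simp add: integral_unique)
qed

lemma int_lim_dec:
  fixes g :: "real \<Rightarrow> 'a::euclidean_space"
  assumes cont: "continuous_on {0..} g" and bnd: "\<And>x. x \<ge> 0 \<Longrightarrow> norm (g x) \<le> C/(1+x)^2"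
  shows "((\<lambda>R. integral {0..R} g) \<longlongrightarrow> integral {0..} g) at_top"
proof -
  have "((\<lambda>R. integral {0..} g - integral {R..} g) \<longlongrightarrow> integral {0..} g - 0) at_top"
    by (intro tendsto_intros tail_lim[OF cont bnd]) auto
  moreover have "\<forall>\<^sub>F R in at_top. integral {0..} g - integral {R..} g = integral {0..R} g"
    using eventually_ge_at_top[of 0] by eventually_elim (use int_split_dec[OF cont bnd] in auto)
  ultimately show ?thesis by (simp add: tendsto_cong)
qed

lemma bound_le: fixes a B x :: real assumes "\<bar>a\<bar> \<le> B/(1+x)^2" "x \<ge> 0" shows "\<bar>a\<bar> \<le> B"
proof -
  have "1 + x > 0" using assms(2) by linarith
  then have p: "(1+x)^2 > 0" by (rule zero_less_power)
  have "B/(1+x)^2 \<ge> 0" using assms(1) abs_ge_zero[of a] by linarith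
  then have B: "B \<ge> 0"
    by (cases "B < 0") (use divide_neg_pos[of B "(1+x)^2"] p in auto)
  have "B/(1+x)^2 \<le> B/1" using B assms(2) by (intro divide_left_mono) (auto simp: one_le_power)
  then show ?thesis using assms(1) by simp
qed

lemma conservation:
  fixes lam T t :: real and q :: "real \<Rightarrow> real \<Rightarrow> real"
  assumes lam: "lam \<in> {1, -1}"
    and T: "0 < T"
    and smooth: "smooth2 q"
    and decay: "rapid_decay q T"
    and mKdV: "\<forall>x>0. \<forall>s\<in>{0<..<T}.
        pdt q x s + pdx (pdx (pdx q)) x s - 6 * lam * (q x s)\<^sup>2 * pdx q x s = 0"
    and t: "t \<in> {0<..<T}"
  shows "integral {0..} (\<lambda>x. (q x t)^2) - integral {0..} (\<lambda>x. (q x 0)^2) = - I_Delta lam q t"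
proof -
  define q1 where "q1 = pder [True] q"
  define q2 where "q2 = pder [True, True] q"
  define q3 where "q3 = pder [True, True, True] q"
  define qt where "qt = pder [False] q"
  have dq: "((\<lambda>y. q y s) has_real_derivative q1 x s) (at x)" for x s
    using pder_dx[OF smooth, of "[]" s x] unfolding q1_def by simp
  have dq1: "((\<lambda>y. q1 y s) has_real_derivative q2 x s) (at x)" for x s
    using pder_dx[OF smooth, of "[True]" s x] unfolding q1_def q2_def by simp
  have dq2: "((\<lambda>y. q2 y s) has_real_derivative q3 x s) (at x)" for x s
    using pder_dx[OF smooth, of "[True,True]" s x] unfolding q2_def q3_def by simp
  have dqt: "((\<lambda>\<sigma>. q x \<sigma>) has_real_derivative qt x s) (at s)" for x s
    using pder_dt[OF smooth, of "[]" x s] unfolding qt_def by simp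
  have c0: "continuous_on S (\<lambda>z. q (fst z) (snd z))" for S using pder_cont2[OF smooth, of S "[]"] by simp
  have c1: "continuous_on S (\<lambda>z. q1 (fst z) (snd z))" for S using pder_cont2[OF smooth, of S "[True]"] unfolding q1_def .
  have c2: "continuous_on S (\<lambda>z. q2 (fst z) (snd z))" for S using pder_cont2[OF smooth, of S "[True,True]"] unfolding q2_def .
  have c3: "continuous_on S (\<lambda>z. q3 (fst z) (snd z))" for S using pder_cont2[OF smooth, of S "[True,True,True]"] unfolding q3_def .
  have ct: "continuous_on S (\<lambda>z. qt (fst z) (snd z))" for S using pder_cont2[OF smooth, of S "[False]"] unfolding qt_def .
  have cx0: "continuous_on S (\<lambda>x. q x s)" for S s using pder_cont_x[OF smooth, of S "[]" s] by simp
  have cx1: "continuous_on S (\<lambda>x. q1 x s)" for S s using pder_cont_x[OF smooth, of S "[True]" s] unfolding q1_def .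
  have cx2: "continuous_on S (\<lambda>x. q2 x s)" for S s using pder_cont_x[OF smooth, of S "[True,True]" s] unfolding q2_def .
  have cs0: "continuous_on S (\<lambda>s. q x s)" for S x using pder_cont_t[OF smooth, of S "[]" x] by simp
  have cs1: "continuous_on S (\<lambda>s. q1 x s)" for S x using pder_cont_t[OF smooth, of S "[True]" x] unfolding q1_def .
  have cs2: "continuous_on S (\<lambda>s. q2 x s)" for S x using pder_cont_t[OF smooth, of S "[True,True]" x] unfolding q2_def .
  define G where "G = (\<lambda>x s. 2 * q x s * q2 x s - (q1 x s)^2 - 3 * lam * (q x s)^4)"
  define Gx where "Gx = (\<lambda>x s. 2 * q x s * q3 x s - 12 * lam * (q x s)^3 * q1 x s)"
  have dG: "((\<lambda>y. G y s) has_real_derivative Gx x s) (at x)" for x s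
    unfolding G_def Gx_def
    by (auto intro!: derivative_eq_intros dq dq1 dq2 simp: algebra_simps power2_eq_square power3_eq_cube
        numeral_eq_Suc)
  have pde: "qt x s + q3 x s - 6 * lam * (q x s)^2 * q1 x s = 0" if x: "x \<ge> 0" and s: "s \<in> {0..T}" for x s
  proof -
    define H where "H = (\<lambda>z. qt (fst z) (snd z) + q3 (fst z) (snd z) - 6 * lam * (q (fst z) (snd z))^2 * q1 (fst z) (snd z))"
    have "H (x, s) = 0"
    proof (rule continuous_constant_on_closure[where S="{0<..} \<times> {0<..<T}"])
      show "continuous_on (closure ({0<..} \<times> {0<..<T})) H"
        unfolding H_def by (intro continuous_intros ct c3 c0 c1)
      show "H z = 0" if "z \<in> {0<..} \<times> {0<..<T}" for z
        using mKdV that unfolding H_def qt_def q3_def q1_def by auto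
      show "(x, s) \<in> closure ({0<..} \<times> {0<..<T})"
        using x s T by (simp add: closure_Times)
    qed
    then show ?thesis unfolding H_def by simp
  qed
  have key: "2 * q x s * qt x s = - Gx x s" if "x \<ge> 0" "s \<in> {0..T}" for x s
  proof -
    have e: "qt x s = - q3 x s + 6 * lam * (q x s)^2 * q1 x s" using pde[OF that] by linarith
    show ?thesis unfolding Gx_def e by (simp add: algebra_simps power2_eq_square power3_eq_cube)
  qed
  have t0: "0 \<le> t" "t \<le> T" using t by auto
  have finite_id: "integral {0..R} (\<lambda>x. (q x t)^2 - (q x 0)^2) = integral {0..t} (\<lambda>s. G 0 s - G R s)"
    if R: "R \<ge> 0" for R
  proof -
    have a: "(q x t)^2 - (q x 0)^2 = integral {0..t} (\<lambda>s. - Gx x s)" if x: "x \<in> {0..R}" for x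
    proof -
      have "((\<lambda>s. 2 * q x s * qt x s) has_integral ((q x t)^2 - (q x 0)^2)) {0..t}"
      proof -
        have "((\<lambda>s. 2 * q x s * qt x s) has_integral ((\<lambda>\<sigma>. (q x \<sigma>)^2) t - (\<lambda>\<sigma>. (q x \<sigma>)^2) 0)) {0..t}"
        proof (rule fundamental_theorem_of_calculus)
          show "0 \<le> t" by (rule t0)
          show "((\<lambda>\<sigma>. (q x \<sigma>)^2) has_vector_derivative 2 * q x s * qt x s) (at s within {0..t})" for s
            unfolding has_real_derivative_iff_has_vector_derivative[symmetric]
            by (rule DERIV_subset[OF _ subset_UNIV]) (auto intro!: derivative_eq_intros dqt)
        qed
        then show ?thesis by simp
      qed
      moreover have "integral {0..t} (\<lambda>s. 2 * q x s * qt x s) = integral {0..t} (\<lambda>s. - Gx x s)"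
        by (rule integral_cong) (use key x t0 in auto)
      ultimately show ?thesis by (simp add: integral_unique)
    qed
    have "integral {0..R} (\<lambda>x. (q x t)^2 - (q x 0)^2) = integral {0..R} (\<lambda>x. integral {0..t} (\<lambda>s. - Gx x s))"
      by (rule integral_cong) (rule a)
    also have "\<dots> = integral (cbox 0 R) (\<lambda>x. integral (cbox 0 t) (\<lambda>s. - Gx x s))" by simp
    also have "\<dots> = integral (cbox 0 t) (\<lambda>s. integral (cbox 0 R) (\<lambda>x. - Gx x s))"
    proof (rule integral_swap_continuous)
      have "continuous_on (cbox (0, 0) (R, t)) (\<lambda>z. - Gx (fst z) (snd z))"
        unfolding Gx_def by (intro continuous_intros c0 c3 c1)
      then show "continuous_on (cbox (0, 0) (R, t)) (\<lambda>(x, s). - Gx x s)"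
        by (simp add: case_prod_beta')
    qed
    also have "\<dots> = integral {0..t} (\<lambda>s. G 0 s - G R s)"
    proof (simp only: cbox_interval, rule integral_cong)
      fix s assume "s \<in> {0..t}"
      have "((\<lambda>x. - Gx x s) has_integral ((\<lambda>y. - G y s) R - (\<lambda>y. - G y s) 0)) {0..R}"
        using R by (intro fundamental_theorem_of_calculus)
           (auto intro!: derivative_eq_intros DERIV_subset[OF dG]
            simp flip: has_real_derivative_iff_has_vector_derivative)
      then have "integral {0..R} (\<lambda>x. - Gx x s) = (\<lambda>y. - G y s) R - (\<lambda>y. - G y s) 0"
        by (rule integral_unique)
      then show "integral {0..R} (\<lambda>x. - Gx x s) = G 0 s - G R s"
        by linarith
    qed
    finally show ?thesis .
  qed
  obtain B0 where B0: "\<And>x s. x \<ge> 0 \<Longrightarrow> s \<in> {0..T} \<Longrightarrow> \<bar>pder [] q x s\<bar> \<le> B0/(1+x)^2"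
    using pder_decay[OF decay] by blast
  obtain B1 where B1: "\<And>x s. x \<ge> 0 \<Longrightarrow> s \<in> {0..T} \<Longrightarrow> \<bar>pder [True] q x s\<bar> \<le> B1/(1+x)^2"
    using pder_decay[OF decay] by blast
  obtain B2 where B2: "\<And>x s. x \<ge> 0 \<Longrightarrow> s \<in> {0..T} \<Longrightarrow> \<bar>pder [True,True] q x s\<bar> \<le> B2/(1+x)^2"
    using pder_decay[OF decay] by blast
  define B where "B = max B0 (max B1 B2)"
  have le: "B0 \<le> B" "B1 \<le> B" "B2 \<le> B" unfolding B_def by auto
  have bq: "\<bar>q x s\<bar> \<le> B/(1+x)^2" if "x \<ge> 0" "s \<in> {0..T}" for x s
    using order_trans[OF B0[OF that] divide_right_mono[OF le(1) zero_le_power2]] by simp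
  have bq1: "\<bar>q1 x s\<bar> \<le> B/(1+x)^2" if "x \<ge> 0" "s \<in> {0..T}" for x s
    using order_trans[OF B1[OF that] divide_right_mono[OF le(2) zero_le_power2]] unfolding q1_def by simp
  have bq2: "\<bar>q2 x s\<bar> \<le> B/(1+x)^2" if "x \<ge> 0" "s \<in> {0..T}" for x s
    using order_trans[OF B2[OF that] divide_right_mono[OF le(3) zero_le_power2]] unfolding q2_def by simp
  have Bnn: "B \<ge> 0" using bq[of 0 0] T abs_ge_zero[of "q 0 0"] by simp
  have bG: "\<bar>G x s\<bar> \<le> (2*B*B + B*B + 3*B^3*B)/(1+x)^2" if x: "x \<ge> 0" and s: "s \<in> {0..T}" for x s
  proof -
    have e1: "\<bar>q x s\<bar> \<le> B" using bound_le[OF bq[OF x s] x] .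
    have e2: "\<bar>q1 x s\<bar> \<le> B" using bound_le[OF bq1[OF x s] x] .
    have p1: "\<bar>2 * q x s * q2 x s\<bar> \<le> 2*B*(B/(1+x)^2)"
      unfolding abs_mult using mult_mono[OF e1 bq2[OF x s]] Bnn by simp
    have p2: "\<bar>(q1 x s)^2\<bar> \<le> B*(B/(1+x)^2)"
      unfolding power2_eq_square[of "q1 x s"] abs_mult using mult_mono[OF e2 bq1[OF x s]] Bnn by simp
    have p3: "\<bar>3 * lam * (q x s)^4\<bar> \<le> 3*(B^3*(B/(1+x)^2))"
    proof -
      have "\<bar>q x s\<bar>^3 \<le> B^3" using e1 by (intro power_mono) auto
      then have "\<bar>q x s\<bar>^3 * \<bar>q x s\<bar> \<le> B^3 * (B/(1+x)^2)"
        using bq[OF x s] Bnn by (intro mult_mono) auto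
      moreover have "\<bar>3 * lam * (q x s)^4\<bar> = 3 * (\<bar>q x s\<bar>^3 * \<bar>q x s\<bar>)"
        using lam by (auto simp: abs_mult power_abs eval_nat_numeral)
      ultimately show ?thesis by simp
    qed
    have "\<bar>G x s\<bar> \<le> 2*B*(B/(1+x)^2) + B*(B/(1+x)^2) + 3*(B^3*(B/(1+x)^2))"
      unfolding G_def using p1 p2 p3 by linarith
    also have "\<dots> = (2*B*B + B*B + 3*B^3*B)/(1+x)^2" by (simp add: add_divide_distrib)
    finally show ?thesis .
  qed
  define h where "h = (\<lambda>x. (q x t)^2 - (q x 0)^2)"
  have hcont: "continuous_on {0..} h" unfolding h_def by (intro continuous_intros cx0)
  have hb: "norm (h x) \<le> (2*B*B)/(1+x)^2" if x: "x \<ge> 0" for x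
  proof -
    have sq: "\<bar>(q x s)^2\<bar> \<le> B*(B/(1+x)^2)" if "s \<in> {0..T}" for s
      unfolding power2_eq_square[of "q x s"] abs_mult using mult_mono[OF bound_le[OF bq[OF x that] x] bq[OF x that]] Bnn by simp
    have "norm (h x) \<le> \<bar>(q x t)^2\<bar> + \<bar>(q x 0)^2\<bar>" unfolding h_def real_norm_def by (rule abs_triangle_ineq4)
    also have "\<dots> \<le> B*(B/(1+x)^2) + B*(B/(1+x)^2)" using sq[of t] sq[of 0] t0 T by (intro add_mono) auto
    also have "\<dots> = (2*B*B)/(1+x)^2" by (simp add: field_simps)
    finally show ?thesis .
  qed
  have L1: "((\<lambda>R. integral {0..R} h) \<longlongrightarrow> integral {0..} h) at_top"
    by (rule int_lim_dec[OF hcont hb])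
  have GR: "((\<lambda>R. integral {0..t} (\<lambda>s. G R s)) \<longlongrightarrow> 0) at_top"
  proof (rule Lim_null_comparison)
    show "\<forall>\<^sub>F R in at_top. norm (integral {0..t} (\<lambda>s. G R s)) \<le> (2*B*B + B*B + 3*B^3*B)/(1+R)^2 * (t - 0)"
      using eventually_ge_at_top[of 0]
    proof eventually_elim
      case (elim R)
      show ?case
      proof (rule integral_bound)
        show "continuous_on {0..t} (\<lambda>s. G R s)" unfolding G_def by (intro continuous_intros cs0 cs1 cs2)
        show "norm (G R s) \<le> (2*B*B + B*B + 3*B^3*B)/(1+R)^2" if "s \<in> {0..t}" for s
          using bG[OF elim, of s] that t0 by auto
      qed (rule t0)
    qed
    show "((\<lambda>R. (2*B*B + B*B + 3*B^3*B)/(1+R)^2 * (t - 0)) \<longlongrightarrow> 0) at_top"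
      by real_asymp
  qed
  have intG: "(\<lambda>s. G y s) integrable_on {0..t}" for y
    unfolding G_def by (intro integrable_continuous_interval continuous_intros cs0 cs1 cs2)
  have L2: "((\<lambda>R. integral {0..t} (\<lambda>s. G 0 s - G R s)) \<longlongrightarrow> integral {0..t} (\<lambda>s. G 0 s) - 0) at_top"
  proof -
    have "((\<lambda>R. integral {0..t} (\<lambda>s. G 0 s) - integral {0..t} (\<lambda>s. G R s)) \<longlongrightarrow> integral {0..t} (\<lambda>s. G 0 s) - 0) at_top"
      by (intro tendsto_intros GR)
    moreover have "integral {0..t} (\<lambda>s. G 0 s - G R s) = integral {0..t} (\<lambda>s. G 0 s) - integral {0..t} (\<lambda>s. G R s)" for R
      by (rule integral_diff[OF intG intG])
    ultimately show ?thesis by simp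
  qed
  have "integral {0..} h = integral {0..t} (\<lambda>s. G 0 s) - 0"
  proof (rule tendsto_unique[OF _ L1])
    show "\<not> trivial_limit (at_top :: real filter)" by simp
    have "\<forall>\<^sub>F R in at_top. integral {0..t} (\<lambda>s. G 0 s - G R s) = integral {0..R} h"
      using eventually_ge_at_top[of 0] by eventually_elim (simp add: finite_id h_def)
    then show "((\<lambda>R. integral {0..R} h) \<longlongrightarrow> integral {0..t} (\<lambda>s. G 0 s) - 0) at_top"
      by (rule Lim_transform_eventually[OF L2])
  qed
  moreover have "integral {0..} h = integral {0..} (\<lambda>x. (q x t)^2) - integral {0..} (\<lambda>x. (q x 0)^2)"
  proof -
    have i: "(\<lambda>x. (q x s)^2) integrable_on {0..}" if s: "s \<in> {0..T}" for s
    proof (rule dec_integrable[where C="B*B"])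
      show "continuous_on {0..} (\<lambda>x. (q x s)^2)" by (intro continuous_intros cx0)
      show "norm ((q x s)^2) \<le> B*B/(1+x)^2" if "x \<ge> 0" for x
        unfolding power2_eq_square[of "q x s"] using mult_mono[OF bound_le[OF bq[OF that s] that] bq[OF that s]] Bnn
        by (simp add: abs_mult)
    qed auto
    show ?thesis unfolding h_def using i[of t] i[of 0] t0 T by (intro integral_diff) auto
  qed
  moreover have "integral {0..t} (\<lambda>s. G 0 s) = - I_Delta lam q t"
  proof -
    have "(\<lambda>s. G 0 s) = (\<lambda>\<tau>. - ((g1 q \<tau>)\<^sup>2 - 2 * g0 q \<tau> * g2 q \<tau> + 3 * lam * (g0 q \<tau>) ^ 4))"
      unfolding G_def g0_def g1_def g2_def q1_def q2_def by (simp add: fun_eq_iff algebra_simps)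
    then have "integral {0..t} (\<lambda>s. G 0 s) = integral {0..t} (\<lambda>\<tau>. - ((g1 q \<tau>)\<^sup>2 - 2 * g0 q \<tau> * g2 q \<tau> + 3 * lam * (g0 q \<tau>) ^ 4))"
      by (simp only:)
    also have "\<dots> = - integral {0..t} (\<lambda>\<tau>. (g1 q \<tau>)\<^sup>2 - 2 * g0 q \<tau> * g2 q \<tau> + 3 * lam * (g0 q \<tau>) ^ 4)"
      by (rule integral_neg)
    finally show ?thesis unfolding I_Delta_def .
  qed
  ultimately show ?thesis by simp
qed

lemma prof_q:
  assumes lam: "lam \<in> {1, -1}" and smooth: "smooth2 q" and decay: "rapid_decay q T" and s: "s \<in> {0..T}"
  shows "prof lam (\<lambda>x. q x s) (\<lambda>x. pder [True] q x s) (\<lambda>x. pder [True,True] q x s)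
           (\<lambda>x. pder [True,True,True] q x s) (\<lambda>x. pder [True,True,True,True] q x s)"
proof -
  have dec: "dec (\<lambda>x. pder ds q x s)" for ds
  proof -
    obtain C where "\<And>x s. x \<ge> 0 \<Longrightarrow> s \<in> {0..T} \<Longrightarrow> \<bar>pder ds q x s\<bar> \<le> C/(1+x)^2"
      using pder_decay[OF decay] by blast
    then show ?thesis unfolding dec_def using s by blast
  qed
  show ?thesis
  proof
    show "\<bar>lam\<bar> = 1" using lam by auto
    show "((\<lambda>x. q x s) has_real_derivative pder [True] q x s) (at x)" for x
      using pder_dx[OF smooth, of "[]" s x] by simp
    show "((\<lambda>x. pder [True] q x s) has_real_derivative pder [True,True] q x s) (at x)" for x
      using pder_dx[OF smooth, of "[True]" s x] by simp
    show "((\<lambda>x. pder [True,True] q x s) has_real_derivative pder [True,True,True] q x s) (at x)" for x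
      using pder_dx[OF smooth, of "[True,True]" s x] by simp
    show "((\<lambda>x. pder [True,True,True] q x s) has_real_derivative pder [True,True,True,True] q x s) (at x)" for x
      using pder_dx[OF smooth, of "[True,True,True]" s x] by simp
    show "continuous_on UNIV (\<lambda>x. pder [True,True,True,True] q x s)" by (rule pder_cont_x[OF smooth])
    show "dec (\<lambda>x. q x s)" using dec[of "[]"] by simp
  qed (rule dec)+
qed

context prof begin

lemma expansion0:
  fixes u v :: "real \<Rightarrow> complex" and M :: real
  assumes k: "k \<noteq> 0" "Im k \<ge> 0" and z1: "norm (zz k) \<le> 1"
    and ub: "\<And>x. x \<ge> 0 \<Longrightarrow> norm (u x) \<le> M" and vb: "\<And>x. x \<ge> 0 \<Longrightarrow> norm (v x) \<le> M"
    and iu: "\<And>x. x \<ge> 0 \<Longrightarrow> ((\<lambda>\<xi>. exp (2 * \<i> * k * complex_of_real (\<xi> - x)) * complex_of_real (f0 \<xi>) * v \<xi>)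
               has_integral (- u x)) {x..}"
    and iv: "\<And>x. x \<ge> 0 \<Longrightarrow> ((\<lambda>\<xi>. complex_of_real lam * complex_of_real (f0 \<xi>) * u \<xi>)
               has_integral (1 - v x)) {x..}"
  shows "norm (u 0 - (complex_of_real (f0 0) * zz k + complex_of_real (a2 0) * zz k ^ 2 + complex_of_real (a3 0) * zz k ^ 3))
           \<le> (KK + \<bar>a4 0\<bar>) * norm (zz k) ^ 4"
    and "norm (v 0 - (1 + complex_of_real (b1 0) * zz k + complex_of_real (b2 0) * zz k ^ 2))
           \<le> (KK + \<bar>b3 0\<bar>) * norm (zz k) ^ 3"
proof -
  note e = expansion[OF k ub vb iu iv]
  have n3: "norm (zz k) ^ 4 \<le> norm (zz k) ^ 3"
    using z1 by (simp add: power_decreasing)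
  have KK0: "KK \<ge> 0" unfolding KK_def using K4_nonneg K5_nonneg by simp
  have "norm (u 0 - (complex_of_real (f0 0) * zz k + complex_of_real (a2 0) * zz k ^ 2 + complex_of_real (a3 0) * zz k ^ 3))
      = norm ((u 0 - Ut k 0) + complex_of_real (a4 0) * zz k ^ 4)"
    unfolding Ut_def by (simp add: algebra_simps)
  also have "\<dots> \<le> norm (u 0 - Ut k 0) + \<bar>a4 0\<bar> * norm (zz k) ^ 4"
    using norm_triangle_ineq[of "u 0 - Ut k 0" "complex_of_real (a4 0) * zz k ^ 4"]
    by (simp add: norm_mult norm_power)
  also have "\<dots> \<le> (KK + \<bar>a4 0\<bar>) * norm (zz k) ^ 4" using e by (simp add: algebra_simps)
  finally show "norm (u 0 - (complex_of_real (f0 0) * zz k + complex_of_real (a2 0) * zz k ^ 2 + complex_of_real (a3 0) * zz k ^ 3))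
           \<le> (KK + \<bar>a4 0\<bar>) * norm (zz k) ^ 4" .
  have "norm (v 0 - (1 + complex_of_real (b1 0) * zz k + complex_of_real (b2 0) * zz k ^ 2))
      = norm ((v 0 - Vt k 0) + complex_of_real (b3 0) * zz k ^ 3)"
    unfolding Vt_def by (simp add: algebra_simps)
  also have "\<dots> \<le> norm (v 0 - Vt k 0) + \<bar>b3 0\<bar> * norm (zz k) ^ 3"
    using norm_triangle_ineq[of "v 0 - Vt k 0" "complex_of_real (b3 0) * zz k ^ 3"]
    by (simp add: norm_mult norm_power)
  also have "\<dots> \<le> KK * norm (zz k) ^ 3 + \<bar>b3 0\<bar> * norm (zz k) ^ 3"
    using e mult_left_mono[OF n3 KK0] by simp
  also have "\<dots> = (KK + \<bar>b3 0\<bar>) * norm (zz k) ^ 3" by (simp add: algebra_simps)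
  finally show "norm (v 0 - (1 + complex_of_real (b1 0) * zz k + complex_of_real (b2 0) * zz k ^ 2))
           \<le> (KK + \<bar>b3 0\<bar>) * norm (zz k) ^ 3" .
qed

end

lemma combine:
  fixes U V w g1 g2 g3 b1 b2 :: complex and A B :: real
  assumes hU: "norm (U - (g1 * w + (g2 + g1*b1) * w^2 + (g3 + g2*b1 + g1*b2) * w^3)) \<le> A * norm w ^ 4"
    and hV: "norm (V - (1 + b1 * w + b2 * w^2)) \<le> B * norm w ^ 3"
    and w1: "norm w \<le> 1" and wsm: "(norm b1 + norm b2 + B) * norm w \<le> 1/2"
    and A: "A \<ge> 0" and B: "B \<ge> 0"
  shows "norm (U / V - (g1 * w + g2 * w^2 + g3 * w^3))
     \<le> 2 * (A + (norm g1 + norm g2 + norm g3) * B + norm (g2*b2 + g3*b1) + norm (g3*b2)) * norm w ^ 4"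
proof -
  define T where "T = g1 * w + g2 * w^2 + g3 * w^3"
  define eU where "eU = U - (g1 * w + (g2 + g1*b1) * w^2 + (g3 + g2*b1 + g1*b2) * w^3)"
  define eV where "eV = V - (1 + b1 * w + b2 * w^2)"
  define n where "n = norm w"
  have n0: "n \<ge> 0" and n1: "n \<le> 1" using w1 unfolding n_def by auto
  have id: "U - T * V = eU - T * eV - (g2*b2 + g3*b1) * w^4 - g3*b2 * w^5"
    unfolding eU_def eV_def T_def by (simp add: algebra_simps power2_eq_square power3_eq_cube power4_eq_xxxx eval_nat_numeral)
  have p2: "n^2 \<le> n" using power_decreasing[of 1 2 n] n0 n1 by simp
  have p3: "n^3 \<le> n" using power_decreasing[of 1 3 n] n0 n1 by simp
  have p5: "n^5 \<le> n^4" using power_decreasing[of 4 5 n] n0 n1 by simp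
  have nT: "norm T \<le> (norm g1 + norm g2 + norm g3) * n"
  proof -
    have "norm T \<le> norm g1 * n + norm g2 * n^2 + norm g3 * n^3"
      unfolding T_def n_def using norm_triangle_ineq
      by (smt (verit) norm_mult norm_power norm_triangle_ineq)
    also have "\<dots> \<le> norm g1 * n + norm g2 * n + norm g3 * n"
      using p2 p3 by (intro add_mono mult_left_mono) auto
    finally show ?thesis by (simp add: algebra_simps)
  qed
  have nUTV: "norm (U - T * V) \<le> (A + (norm g1 + norm g2 + norm g3) * B + norm (g2*b2 + g3*b1) + norm (g3*b2)) * n^4"
  proof -
    have "norm (U - T * V) \<le> norm eU + norm T * norm eV + norm (g2*b2 + g3*b1) * n^4 + norm (g3*b2) * n^5"
      unfolding id n_def
      by (smt (verit) norm_mult norm_power norm_triangle_ineq4 norm_triangle_ineq)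
    also have "\<dots> \<le> A * n^4 + ((norm g1 + norm g2 + norm g3) * n) * (B * n^3) + norm (g2*b2 + g3*b1) * n^4 + norm (g3*b2) * n^4"
      using hU hV nT p5 unfolding eU_def eV_def n_def
      by (intro add_mono mult_mono mult_left_mono) auto
    also have "\<dots> = (A + (norm g1 + norm g2 + norm g3) * B + norm (g2*b2 + g3*b1) + norm (g3*b2)) * n^4"
      by (simp add: algebra_simps eval_nat_numeral)
    finally show ?thesis .
  qed
  have nV: "norm V \<ge> 1/2"
  proof -
    have "norm (1 + b1 * w + b2 * w^2 + eV) \<ge> 1 - norm b1 * n - norm b2 * n^2 - B * n^3"
    proof -
      have "norm (b1 * w + b2 * w^2 + eV) \<le> norm b1 * n + norm b2 * n^2 + B * n^3"
        using hV unfolding eV_def n_def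
        by (smt (verit) norm_mult norm_power norm_triangle_ineq)
      moreover have "norm (1 + b1 * w + b2 * w^2 + eV) \<ge> 1 - norm (b1 * w + b2 * w^2 + eV)"
      proof -
        define X where "X = b1 * w + b2 * w^2 + eV"
        have "norm (1::complex) \<le> norm (1 + X) + norm X" using norm_triangle_ineq4[of "1 + X" X] by simp
        then have h: "1 - norm X \<le> norm (1 + X)" by simp
        have e: "1 + b1 * w + b2 * w^2 + eV = 1 + X" unfolding X_def by (simp add: algebra_simps)
        show ?thesis unfolding X_def[symmetric] e by (rule h)
      qed
      ultimately show ?thesis by linarith
    qed
    moreover have "norm b1 * n + norm b2 * n^2 + B * n^3 \<le> (norm b1 + norm b2 + B) * n"
    proof -
      have "norm b2 * n^2 \<le> norm b2 * n" using p2 by (intro mult_left_mono) auto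
      moreover have "B * n^3 \<le> B * n" using p3 B by (intro mult_left_mono) auto
      ultimately show ?thesis by (simp add: algebra_simps)
    qed
    moreover have "norm (1 + b1 * w + b2 * w^2 + eV) = norm V" unfolding eV_def by simp
    ultimately show ?thesis using wsm unfolding n_def by linarith
  qed
  have V0: "V \<noteq> 0" using nV by auto
  have "U / V - T = (U - T * V) / V" using V0 by (simp add: diff_divide_distrib)
  then have "norm (U / V - T) = norm (U - T * V) / norm V" by (simp add: norm_divide)
  also have "\<dots> \<le> norm (U - T * V) / (1/2)" using nV by (intro divide_left_mono) auto
  also have "\<dots> \<le> 2 * ((A + (norm g1 + norm g2 + norm g3) * B + norm (g2*b2 + g3*b1) + norm (g3*b2)) * n^4)"
    using nUTV by simp
  finally show ?thesis unfolding T_def n_def by (simp only: mult.assoc)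
qed

lemma div2i: "(z::complex) / (2 * \<i>) = - \<i> * z / 2"
  by (simp add: field_simps)

lemma gamma3_eq:
  "Phi1_3 lam q t * (2 * \<i>) ^ 3 = complex_of_real
     (- lam * g0 q t ^ 3 / 2 + lam * g0 q t * g0 q 0 ^ 2 / 2 + g0 q t * I_Delta lam q t ^ 2 / 2
      - lam * g1 q t * I_Delta lam q t - lam * g0 q t ^ 3 + g2 q t)"
  unfolding Phi1_3_def Phi2_2_def Phi2_1_def div2i
  by (simp add: complex_eq_iff power3_eq_cube power2_eq_square algebra_simps) (simp add: field_simps)

lemma gamma2_eq:
  "Phi1_2 lam q t * (2 * \<i>) ^ 2 = complex_of_real (- g1 q t + lam * g0 q t * I_Delta lam q t)"
  unfolding Phi1_2_def
  by (simp add: complex_eq_iff power2_eq_square algebra_simps)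

lemma gamma1_eq:
  "Phi1_1 q t * (2 * \<i>) = complex_of_real (g0 q t)"
  unfolding Phi1_1_def div2i by (simp add: complex_eq_iff)

theorem lemma4p1:
  fixes lam T t :: real
    and q :: "real \<Rightarrow> real \<Rightarrow> real"
    and Phi1 Phi2 :: "real \<Rightarrow> complex \<Rightarrow> complex"
    and m12 m22 :: "real \<Rightarrow> real \<Rightarrow> complex \<Rightarrow> complex"
  assumes lam: "lam \<in> {1, -1}"
    and T: "0 < T"
    and smooth: "smooth2 q"
    and decay: "rapid_decay q T"
    and mKdV: "\<forall>x>0. \<forall>s\<in>{0<..<T}.
        pdt q x s + pdx (pdx (pdx q)) x s - 6 * lam * (q x s)\<^sup>2 * pdx q x s = 0"
    and Phi_cont: "\<forall>k. continuous_on {0..<T} (\<lambda>s. Phi1 s k) \<and> continuous_on {0..<T} (\<lambda>s. Phi2 s k)"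
    and Phi1_eq: "\<forall>k. \<forall>s\<in>{0<..<T}.
        ((\<lambda>s'. exp (8 * \<i> * k ^ 3 * complex_of_real (s' - s)) *
            (- 2 * \<i> * k * complex_of_real lam * complex_of_real ((g0 q s')\<^sup>2) * Phi1 s' k
             + (complex_of_real (2 * lam * (g0 q s') ^ 3) + 4 * k\<^sup>2 * complex_of_real (g0 q s')
                + 2 * \<i> * k * complex_of_real (g1 q s') - complex_of_real (g2 q s')) * Phi2 s' k))
          has_integral Phi1 s k) {0..s}"
    and Phi2_eq: "\<forall>k. \<forall>s\<in>{0<..<T}.
        ((\<lambda>s'. complex_of_real lam *
            ((complex_of_real (2 * lam * (g0 q s') ^ 3) + 4 * k\<^sup>2 * complex_of_real (g0 q s')
                - 2 * \<i> * k * complex_of_real (g1 q s') - complex_of_real (g2 q s')) * Phi1 s' k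
             + 2 * \<i> * k * complex_of_real ((g0 q s')\<^sup>2) * Phi2 s' k))
          has_integral (Phi2 s k - 1)) {0..s}"
    and mu_bdd: "\<forall>s\<in>{0..<T}. \<forall>k. Im k \<ge> 0 \<longrightarrow>
        bounded ((\<lambda>x. m12 x s k) ` {0..}) \<and> bounded ((\<lambda>x. m22 x s k) ` {0..})"
    and mu12_eq: "\<forall>s\<in>{0..<T}. \<forall>k. Im k \<ge> 0 \<longrightarrow> (\<forall>x\<ge>0.
        ((\<lambda>\<xi>. exp (2 * \<i> * k * complex_of_real (\<xi> - x)) * complex_of_real (q \<xi> s) * m22 \<xi> s k)
          has_integral (- m12 x s k)) {x..})"
    and mu22_eq: "\<forall>s\<in>{0..<T}. \<forall>k. Im k \<ge> 0 \<longrightarrow> (\<forall>x\<ge>0.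
        ((\<lambda>\<xi>. complex_of_real lam * complex_of_real (q \<xi> s) * m12 \<xi> s k)
          has_integral (1 - m22 x s k)) {x..})"
    and t: "t \<in> {0<..<T}"
  shows "(\<lambda>k. m12 0 t k / m22 0 0 k
            - (Phi1_1 q t / k + Phi1_2 lam q t / k\<^sup>2 + Phi1_3 lam q t / k ^ 3))
         \<in> O[inf at_infinity (principal D1)](\<lambda>k. 1 / k ^ 4)"
proof -
  have lam1: "\<bar>lam\<bar> = 1" using lam by auto
  have lam2: "lam * lam = 1" using lam by auto
  have t0: "t \<in> {0..T}" using t by auto
  have T0: "(0::real) \<in> {0..T}" using T by auto
  interpret A: prof lam "\<lambda>x. q x t" "\<lambda>x. pder [True] q x t" "\<lambda>x. pder [True,True] q x t"
      "\<lambda>x. pder [True,True,True] q x t" "\<lambda>x. pder [True,True,True,True] q x t"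
    by (rule prof_q[OF lam smooth decay t0])
  interpret B: prof lam "\<lambda>x. q x 0" "\<lambda>x. pder [True] q x 0" "\<lambda>x. pder [True,True] q x 0"
      "\<lambda>x. pder [True,True,True] q x 0" "\<lambda>x. pder [True,True,True,True] q x 0"
    by (rule prof_q[OF lam smooth decay T0])
  have cons: "A.P 0 - B.P 0 = - I_Delta lam q t"
    unfolding A.P_def B.P_def using conservation[OF lam T smooth decay mKdV t] by simp
  define I where "I = I_Delta lam q t"
  define g1c where "g1c = Phi1_1 q t * (2 * \<i>)"
  define g2c where "g2c = Phi1_2 lam q t * (2 * \<i>) ^ 2"
  define g3c where "g3c = Phi1_3 lam q t * (2 * \<i>) ^ 3"
  define be1 where "be1 = complex_of_real (B.b1 0)"
  define be2 where "be2 = complex_of_real (B.b2 0)"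
  have c1: "complex_of_real (q 0 t) = g1c" unfolding g1c_def gamma1_eq g0_def ..
  have EP: "A.P 0 = B.P 0 - I" using cons unfolding I_def by simp
  have c2: "complex_of_real (A.a2 0) = g2c + g1c * be1"
  proof -
    have "A.a2 0 = - g1 q t + lam * g0 q t * I + g0 q t * B.b1 0"
      unfolding A.a2_def A.b1_def B.b1_def g0_def g1_def EP
      by (simp add: algebra_simps)
    then show ?thesis unfolding g2c_def g1c_def be1_def gamma2_eq gamma1_eq I_def by simp
  qed
  have c3: "complex_of_real (A.a3 0) = g3c + g2c * be1 + g1c * be2"
  proof -
    have "A.a3 0 = (- lam * g0 q t ^ 3 / 2 + lam * g0 q t * g0 q 0 ^ 2 / 2 + g0 q t * I ^ 2 / 2
      - lam * g1 q t * I - lam * g0 q t ^ 3 + g2 q t) + (- g1 q t + lam * g0 q t * I) * B.b1 0 + g0 q t * B.b2 0"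
    proof -
      have "lam = 1 \<or> lam = -1" using lam by auto
      then show ?thesis
        unfolding A.a3_def A.b2_def A.a2d_def A.b1_def B.b1_def B.b2_def g0_def g1_def g2_def EP
        by (elim disjE) (simp_all add: algebra_simps power2_eq_square power3_eq_cube field_simps)
    qed
    then show ?thesis unfolding g3c_def g2c_def g1c_def be1_def be2_def gamma3_eq gamma2_eq gamma1_eq I_def
      by simp
  qed
  define AA where "AA = A.KK + \<bar>A.a4 0\<bar>"
  define BB where "BB = B.KK + \<bar>B.b3 0\<bar>"
  have AA0: "AA \<ge> 0" unfolding AA_def A.KK_def using A.K4_nonneg A.K5_nonneg by simp
  have BB0: "BB \<ge> 0" unfolding BB_def B.KK_def using B.K4_nonneg B.K5_nonneg by simp
  define Kc where "Kc = 2 * (AA + (norm g1c + norm g2c + norm g3c) * BB + norm (g2c*be2 + g3c*be1) + norm (g3c*be2))"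
  define R where "R = max 1 (norm be1 + norm be2 + BB + 1)"
  show ?thesis
  proof (rule bigoI[where c="Kc/16"])
    show "\<forall>\<^sub>F k in inf at_infinity (principal D1). norm (m12 0 t k / m22 0 0 k
            - (Phi1_1 q t / k + Phi1_2 lam q t / k\<^sup>2 + Phi1_3 lam q t / k ^ 3)) \<le> Kc/16 * norm (1 / k ^ 4)"
      unfolding eventually_inf_principal eventually_at_infinity
    proof (intro exI[of _ R] allI impI)
      fix k :: complex assume kR: "R \<le> norm k" and kD: "k \<in> D1"
      have Ik: "Im k \<ge> 0" and k0: "k \<noteq> 0" using kD unfolding D1_def by auto
      have nk: "norm k \<ge> 1" using kR unfolding R_def by auto
      define w where "w = (- \<i>/2) / k"
      have wA: "A.zz k = w" unfolding A.zz_def w_def ..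
      have wB: "B.zz k = w" unfolding B.zz_def w_def ..
      have nw: "norm w = 1 / (2 * norm k)" unfolding w_def by (simp add: norm_divide)
      have w1: "norm w \<le> 1" using nk unfolding nw by (simp add: divide_le_eq)
      have wsm: "(norm be1 + norm be2 + BB) * norm w \<le> 1/2"
      proof -
        have "(norm be1 + norm be2 + BB) \<le> norm k" using kR unfolding R_def by auto
        then have "(norm be1 + norm be2 + BB) * norm w \<le> norm k * norm w"
          by (intro mult_right_mono) auto
        also have "\<dots> = 1/2" unfolding nw using k0 by simp
        finally show ?thesis .
      qed
      obtain M1 where M1: "\<And>x. x \<ge> 0 \<Longrightarrow> norm (m12 x t k) \<le> M1"
        using mu_bdd t Ik unfolding bounded_iff by fastforce
      obtain M2 where M2: "\<And>x. x \<ge> 0 \<Longrightarrow> norm (m22 x t k) \<le> M2"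
        using mu_bdd t Ik unfolding bounded_iff by fastforce
      obtain M3 where M3: "\<And>x. x \<ge> 0 \<Longrightarrow> norm (m12 x 0 k) \<le> M3"
        using mu_bdd T Ik unfolding bounded_iff by fastforce
      obtain M4 where M4: "\<And>x. x \<ge> 0 \<Longrightarrow> norm (m22 x 0 k) \<le> M4"
        using mu_bdd T Ik unfolding bounded_iff by fastforce
      have eA: "norm (m12 0 t k - (complex_of_real (q 0 t) * A.zz k + complex_of_real (A.a2 0) * A.zz k ^ 2
          + complex_of_real (A.a3 0) * A.zz k ^ 3)) \<le> (A.KK + \<bar>A.a4 0\<bar>) * norm (A.zz k) ^ 4"
      proof (rule A.expansion0(1)[where u="\<lambda>x. m12 x t k" and v="\<lambda>x. m22 x t k" and M="max M1 M2"])
        show "norm (A.zz k) \<le> 1" using w1 wA by simp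
        show "norm (m12 x t k) \<le> max M1 M2" if "x \<ge> 0" for x using M1[OF that] by simp
        show "norm (m22 x t k) \<le> max M1 M2" if "x \<ge> 0" for x using M2[OF that] by simp
        show "((\<lambda>\<xi>. exp (2 * \<i> * k * complex_of_real (\<xi> - x)) * complex_of_real (q \<xi> t) * m22 \<xi> t k)
               has_integral (- m12 x t k)) {x..}" if "x \<ge> 0" for x
          using mu12_eq t Ik that by auto
        show "((\<lambda>\<xi>. complex_of_real lam * complex_of_real (q \<xi> t) * m12 \<xi> t k)
               has_integral (1 - m22 x t k)) {x..}" if "x \<ge> 0" for x
          using mu22_eq t Ik that by auto
      qed (use k0 Ik in auto)
      have eB: "norm (m22 0 0 k - (1 + complex_of_real (B.b1 0) * B.zz k + complex_of_real (B.b2 0) * B.zz k ^ 2))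
           \<le> (B.KK + \<bar>B.b3 0\<bar>) * norm (B.zz k) ^ 3"
      proof (rule B.expansion0(2)[where u="\<lambda>x. m12 x 0 k" and v="\<lambda>x. m22 x 0 k" and M="max M3 M4"])
        show "norm (B.zz k) \<le> 1" using w1 wB by simp
        show "norm (m12 x 0 k) \<le> max M3 M4" if "x \<ge> 0" for x using M3[OF that] by simp
        show "norm (m22 x 0 k) \<le> max M3 M4" if "x \<ge> 0" for x using M4[OF that] by simp
        show "((\<lambda>\<xi>. exp (2 * \<i> * k * complex_of_real (\<xi> - x)) * complex_of_real (q \<xi> 0) * m22 \<xi> 0 k)
               has_integral (- m12 x 0 k)) {x..}" if "x \<ge> 0" for x
          using mu12_eq T Ik that by auto
        show "((\<lambda>\<xi>. complex_of_real lam * complex_of_real (q \<xi> 0) * m12 \<xi> 0 k)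
               has_integral (1 - m22 x 0 k)) {x..}" if "x \<ge> 0" for x
          using mu22_eq T Ik that by auto
      qed (use k0 Ik in auto)
      have hU: "norm (m12 0 t k - (g1c * w + (g2c + g1c*be1) * w^2 + (g3c + g2c*be1 + g1c*be2) * w^3)) \<le> AA * norm w ^ 4"
        using eA unfolding wA c1 c2 c3 AA_def .
      have hV: "norm (m22 0 0 k - (1 + be1 * w + be2 * w^2)) \<le> BB * norm w ^ 3"
        using eB unfolding wB be1_def[symmetric] be2_def[symmetric] BB_def .
      have main: "norm (m12 0 t k / m22 0 0 k - (g1c * w + g2c * w^2 + g3c * w^3)) \<le> Kc * norm w ^ 4"
        unfolding Kc_def by (rule combine[OF hU hV w1 wsm AA0 BB0])
      have eqT: "g1c * w + g2c * w^2 + g3c * w^3 = Phi1_1 q t / k + Phi1_2 lam q t / k\<^sup>2 + Phi1_3 lam q t / k ^ 3"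
        unfolding g1c_def g2c_def g3c_def w_def using k0
        by (simp add: field_simps power2_eq_square power3_eq_cube)
      have nw4: "norm w ^ 4 = norm (1 / k ^ 4) / 16"
        unfolding nw by (simp add: norm_divide norm_power field_simps)
      show "norm (m12 0 t k / m22 0 0 k
            - (Phi1_1 q t / k + Phi1_2 lam q t / k\<^sup>2 + Phi1_3 lam q t / k ^ 3)) \<le> Kc/16 * norm (1 / k ^ 4)"
        using main unfolding eqT nw4 by simp
    qed
  qed
qed

end
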